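(* Let $G$ be a distance-regular graph of diameter $3$ with intersection numbers satisfying $a_1=c_2$, which is a strongly Deza graph, and let $G'$ be a graph cospectral with $G$. If $G'$ is a Deza graph, then $G'$ is a strongly Deza graph and one of the following holds: (i) $G'$ is distance-regular with the same intersection numbers as $G$; (ii) the Deza parameters $(b,a)$ of $G'$ differ from those of $G$ (which are $(c_2,0)$).
   Context: All graphs are finite, simple and undirected; eigenvalues of a graph are those of its adjacency matrix; two graphs are cospectral if their adjacency matrices have the same multiset of eigenvalues. A Deza graph with parameters $(n,k,b,a)$, where $b\geqslant a$, is a $k$-regular graph on $n$ vertices, which is neither complete nor edgeless, such that any two distinct vertices have exactly $b$ or exactly $a$ common neighbours. If $b>a$, the children $G_A$ and $G_B$ of $G$ are the graphs on the vertex set of $G$ in which two distinct vertices are adjacent if and only if they have exactly $a$ (for $G_A$), respectively exactly $b$ (for $G_B$), common neighbours in $G$; if $b=a$, $G_A$ is the complete graph and $G_B$ is the edgeless graph. A strongly regular graph with parameters $(n,k,\lambda,\mu)$ is a $k$-regular graph on $n$ vertices, neither complete nor edgeless, in which any two adjacent vertices have exactly $\lambda$ common neighbours and any two distinct non-adjacent vertices have exactly $\mu$ common neighbours (disconnected examples, i.e. disjoint unions of at least two cliques of equal size, are allowed). A strongly Deza graph is a Deza graph both of whose children are strongly regular graphs. A connected graph $G=(V,E)$ of diameter $d$ is distance-regular if there are numbers $a_i,b_i,c_i$ ($0\leqslant i\leqslant d$), its intersection numbers, such that for all $x,y\in V$ at distance $i$, the vertex $y$ has exactly $b_i$ neighbours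 at distance $i+1$ from $x$, $a_i$ neighbours at distance $i$ from $x$, and $c_i$ neighbours at distance $i-1$ from $x$. A distance-regular graph of diameter $3$ with $a_1=c_2$ is a Deza graph with parameters $(n,k,c_2,0)$. *)

theory Defs
  imports "Jordan_Normal_Form.Char_Poly" "HOL-Library.Multiset"
begin

definition simple_graph :: "nat \<Rightarrow> (nat \<Rightarrow> nat \<Rightarrow> bool) \<Rightarrow> bool" where
  "simple_graph n E \<longleftrightarrow> (\<forall>x y. E x y \<longrightarrow> x < n \<and> y < n \<and> E y x \<and> x \<noteq> y)"

definition adj_matrix :: "nat \<Rightarrow> (nat \<Rightarrow> nat \<Rightarrow> bool) \<Rightarrow> complex mat" where
  "adj_matrix n E = mat n n (\<lambda>(i, j). if E i j then 1 else 0)"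

definition eigenvalue_mset :: "complex mat \<Rightarrow> complex multiset" where
  "eigenvalue_mset A = Abs_multiset (\<lambda>x. order x (char_poly A))"

definition cospectral :: "nat \<Rightarrow> (nat \<Rightarrow> nat \<Rightarrow> bool) \<Rightarrow> nat \<Rightarrow> (nat \<Rightarrow> nat \<Rightarrow> bool) \<Rightarrow> bool" where
  "cospectral n E n' E' \<longleftrightarrow>
     eigenvalue_mset (adj_matrix n E) = eigenvalue_mset (adj_matrix n' E')"

definition common_nbrs :: "nat \<Rightarrow> (nat \<Rightarrow> nat \<Rightarrow> bool) \<Rightarrow> nat \<Rightarrow> nat \<Rightarrow> nat" where
  "common_nbrs n E x y = card {z. z < n \<and> E x z \<and> E y z}"

definition regular :: "nat \<Rightarrow> (nat \<Rightarrow> nat \<Rightarrow> bool) \<Rightarrow> nat \<Rightarrow> bool" where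
  "regular n E k \<longleftrightarrow> (\<forall>x<n. card {y. y < n \<and> E x y} = k)"

definition complete_graph :: "nat \<Rightarrow> (nat \<Rightarrow> nat \<Rightarrow> bool) \<Rightarrow> bool" where
  "complete_graph n E \<longleftrightarrow> (\<forall>x<n. \<forall>y<n. x \<noteq> y \<longrightarrow> E x y)"

definition edgeless :: "nat \<Rightarrow> (nat \<Rightarrow> nat \<Rightarrow> bool) \<Rightarrow> bool" where
  "edgeless n E \<longleftrightarrow> (\<forall>x<n. \<forall>y<n. \<not> E x y)"

definition deza :: "nat \<Rightarrow> (nat \<Rightarrow> nat \<Rightarrow> bool) \<Rightarrow> nat \<Rightarrow> nat \<Rightarrow> nat \<Rightarrow> bool" where
  "deza n E k b a \<longleftrightarrow> simple_graph n E \<and> b \<ge> a \<and> regular n E k \<and>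
     \<not> complete_graph n E \<and> \<not> edgeless n E \<and>
     (\<forall>x<n. \<forall>y<n. x \<noteq> y \<longrightarrow> common_nbrs n E x y = b \<or> common_nbrs n E x y = a)"

definition childA :: "nat \<Rightarrow> (nat \<Rightarrow> nat \<Rightarrow> bool) \<Rightarrow> nat \<Rightarrow> nat \<Rightarrow> nat \<Rightarrow> nat \<Rightarrow> bool" where
  "childA n E b a x y \<longleftrightarrow> x < n \<and> y < n \<and> x \<noteq> y \<and>
     (if b > a then common_nbrs n E x y = a else True)"

definition childB :: "nat \<Rightarrow> (nat \<Rightarrow> nat \<Rightarrow> bool) \<Rightarrow> nat \<Rightarrow> nat \<Rightarrow> nat \<Rightarrow> nat \<Rightarrow> bool" where
  "childB n E b a x y \<longleftrightarrow> x < n \<and> y < n \<and> x \<noteq> y \<and>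
     (if b > a then common_nbrs n E x y = b else False)"

text \<open>Strongly regular graph with parameters (n,k,lambda,mu) (disconnected ones allowed).\<close>
definition srg :: "nat \<Rightarrow> (nat \<Rightarrow> nat \<Rightarrow> bool) \<Rightarrow> nat \<Rightarrow> nat \<Rightarrow> nat \<Rightarrow> bool" where
  "srg n E k l m \<longleftrightarrow> simple_graph n E \<and> regular n E k \<and>
     \<not> complete_graph n E \<and> \<not> edgeless n E \<and>
     (\<forall>x<n. \<forall>y<n. E x y \<longrightarrow> common_nbrs n E x y = l) \<and>
     (\<forall>x<n. \<forall>y<n. x \<noteq> y \<longrightarrow> \<not> E x y \<longrightarrow> common_nbrs n E x y = m)"

definition strongly_regular :: "nat \<Rightarrow> (nat \<Rightarrow> nat \<Rightarrow> bool) \<Rightarrow> bool" where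
  "strongly_regular n E \<longleftrightarrow> (\<exists>k l m. srg n E k l m)"

definition strongly_deza :: "nat \<Rightarrow> (nat \<Rightarrow> nat \<Rightarrow> bool) \<Rightarrow> nat \<Rightarrow> nat \<Rightarrow> nat \<Rightarrow> bool" where
  "strongly_deza n E k b a \<longleftrightarrow> deza n E k b a \<and>
     strongly_regular n (childA n E b a) \<and> strongly_regular n (childB n E b a)"

fun walk :: "nat \<Rightarrow> (nat \<Rightarrow> nat \<Rightarrow> bool) \<Rightarrow> nat \<Rightarrow> nat \<Rightarrow> nat \<Rightarrow> bool" where
  "walk n E 0 x y \<longleftrightarrow> x = y"
| "walk n E (Suc m) x y \<longleftrightarrow> (\<exists>z<n. E x z \<and> walk n E m z y)"

definition gdist :: "nat \<Rightarrow> (nat \<Rightarrow> nat \<Rightarrow> bool) \<Rightarrow> nat \<Rightarrow> nat \<Rightarrow> nat" where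
  "gdist n E x y = (LEAST m. walk n E m x y)"

definition connected_graph :: "nat \<Rightarrow> (nat \<Rightarrow> nat \<Rightarrow> bool) \<Rightarrow> bool" where
  "connected_graph n E \<longleftrightarrow> n > 0 \<and> (\<forall>x<n. \<forall>y<n. \<exists>m. walk n E m x y)"

definition has_diameter :: "nat \<Rightarrow> (nat \<Rightarrow> nat \<Rightarrow> bool) \<Rightarrow> nat \<Rightarrow> bool" where
  "has_diameter n E d \<longleftrightarrow> connected_graph n E \<and>
     (\<forall>x<n. \<forall>y<n. gdist n E x y \<le> d) \<and> (\<exists>x<n. \<exists>y<n. gdist n E x y = d)"

definition distance_regular ::
  "nat \<Rightarrow> (nat \<Rightarrow> nat \<Rightarrow> bool) \<Rightarrow> nat \<Rightarrow> (nat \<Rightarrow> nat) \<Rightarrow> (nat \<Rightarrow> nat) \<Rightarrow> (nat \<Rightarrow> nat) \<Rightarrow> bool" where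
  "distance_regular n E d ai bi ci \<longleftrightarrow> simple_graph n E \<and> has_diameter n E d \<and>
     (\<forall>x<n. \<forall>y<n. let i = gdist n E x y in
        card {z. z < n \<and> E y z \<and> gdist n E x z = i + 1} = bi i \<and>
        card {z. z < n \<and> E y z \<and> gdist n E x z = i} = ai i \<and>
        card {z. z < n \<and> E y z \<and> gdist n E x z + 1 = i} = ci i)"

end

theory Submission
  imports Defs "Jordan_Normal_Form.Schur_Decomposition"
begin


lemma sum_single:
  assumes "finite A" "i \<in> A" "\<And>j. j \<in> A \<Longrightarrow> j \<noteq> i \<Longrightarrow> f j = 0"
  shows "sum f A = f i"
proof -
  have "sum f A = f i + sum f (A - {i})" using assms by (simp add: sum.remove)
  also have "sum f (A - {i}) = 0" using assms by (intro sum.neutral) auto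
  finally show ?thesis by simp
qed

definition mtrace :: "'a::comm_ring_1 mat \<Rightarrow> 'a" where
  "mtrace A = (\<Sum>i<dim_row A. A $$ (i,i))"

lemma mtrace_comm:
  assumes "X \<in> carrier_mat n n" "Y \<in> carrier_mat n n"
  shows "mtrace (X * Y) = mtrace (Y * X)"
proof -
  have "mtrace (X * Y) = (\<Sum>i<n. \<Sum>j<n. X $$ (i,j) * Y $$ (j,i))"
    using assms by (simp add: mtrace_def scalar_prod_def atLeast0LessThan)
  also have "\<dots> = (\<Sum>j<n. \<Sum>i<n. Y $$ (j,i) * X $$ (i,j))"
    by (subst sum.swap) (simp add: mult.commute)
  also have "\<dots> = mtrace (Y * X)"
    using assms by (simp add: mtrace_def scalar_prod_def atLeast0LessThan)
  finally show ?thesis .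
qed

lemma ut_mult:
  assumes "B \<in> carrier_mat n n" "C \<in> carrier_mat n n" "upper_triangular B" "upper_triangular C"
  shows "upper_triangular (B * C) \<and> (\<forall>i<n. (B * C) $$ (i,i) = B $$ (i,i) * C $$ (i,i))"
proof (intro conjI allI impI upper_triangularI)
  fix i j assume ji: "j < i" and i: "i < dim_row (B * C)"
  then have "(B * C) $$ (i,j) = (\<Sum>k<n. B $$ (i,k) * C $$ (k,j))"
    using assms by (simp add: scalar_prod_def atLeast0LessThan)
  also have "\<dots> = 0"
  proof (rule sum.neutral, intro ballI)
    fix k assume k: "k \<in> {..<n}"
    show "B $$ (i,k) * C $$ (k,j) = 0"
    proof (cases "k < i")
      case True then have "B $$ (i,k) = 0" using assms(1,3) i by (intro upper_triangularD) auto
      then show ?thesis by simp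
    next
      case False then have "j < k" using ji by auto
      then have "C $$ (k,j) = 0" using assms(2,4) k by (intro upper_triangularD) auto
      then show ?thesis by simp
    qed
  qed
  finally show "(B * C) $$ (i,j) = 0" .
next
  fix i assume i: "i < n"
  have "(B * C) $$ (i,i) = (\<Sum>k<n. B $$ (i,k) * C $$ (k,i))"
    using assms i by (simp add: scalar_prod_def atLeast0LessThan)
  also have "\<dots> = B $$ (i,i) * C $$ (i,i)"
  proof (rule sum_single)
    fix k assume k: "k \<in> {..<n}" "k \<noteq> i"
    show "B $$ (i,k) * C $$ (k,i) = 0"
    proof (cases "k < i")
      case True then have "B $$ (i,k) = 0" using assms(1,3) i by (intro upper_triangularD) auto
      then show ?thesis by simp
    next
      case False then have "i < k" using k by auto
      then have "C $$ (k,i) = 0" using assms(2,4) k by (intro upper_triangularD) auto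
      then show ?thesis by simp
    qed
  qed (use i in auto)
  finally show "(B * C) $$ (i,i) = B $$ (i,i) * C $$ (i,i)" .
qed

lemma ut_pow:
  assumes "B \<in> carrier_mat n n" "upper_triangular B"
  shows "upper_triangular (B ^\<^sub>m m) \<and> (\<forall>i<n. (B ^\<^sub>m m) $$ (i,i) = B $$ (i,i) ^ m)"
proof (induction m)
  case 0 then show ?case using assms by auto
next
  case (Suc m)
  have c: "B ^\<^sub>m m \<in> carrier_mat n n" using assms by auto
  show ?case using ut_mult[OF c assms(1) _ assms(2)] Suc by (auto simp: power_commutes)
qed

lemma order_prod_linear:
  "Polynomial.order x (\<Prod>a\<leftarrow>es. [:- a, 1:]) = count (mset es) (x::complex)"
proof (induction es)
  case Nil then show ?case by simp
next
  case (Cons a es)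
  have nz: "(\<Prod>a\<leftarrow>es. [:- a, 1:]) \<noteq> (0::complex poly)"
    by (auto simp: prod_list_zero_iff)
  have "Polynomial.order x ([:- a, 1:] * (\<Prod>a\<leftarrow>es. [:- a, 1:])) = Polynomial.order x [:- a, 1:] + Polynomial.order x (\<Prod>a\<leftarrow>es. [:- a, 1:])"
    by (rule order_mult[OF no_zero_divisors[OF _ nz]]) simp
  moreover have "Polynomial.order x [:- a, 1:] = (if x = a then 1 else 0)"
  proof (cases "x = a")
    case True then show ?thesis using order_power_n_n[of a 1] by simp
  next
    case False then have "poly [:- a, 1:] x \<noteq> 0" by simp
    then show ?thesis using False by (simp add: order_0I)
  qed
  ultimately show ?case using Cons by simp
qed

lemma spectral:
  fixes A :: "complex mat"
  assumes A: "A \<in> carrier_mat n n"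
  shows "\<exists>es. length es = n \<and> eigenvalue_mset A = mset es \<and>
     (\<forall>m. mtrace (A ^\<^sub>m m) = (\<Sum>e\<leftarrow>es. e ^ m))"
proof -
  obtain es where cp: "char_poly A = (\<Prod>a\<leftarrow>es. [:- a, 1:])" and len: "length es = n"
    using char_poly_factorized[OF A] by auto
  have em: "eigenvalue_mset A = mset es"
    unfolding eigenvalue_mset_def cp order_prod_linear by (simp add: count_inverse)
  obtain B P Q where sd: "schur_decomposition A es = (B,P,Q)" by (cases "schur_decomposition A es") auto
  from schur_decomposition[OF A cp sd] have sw: "similar_mat_wit A B P Q" and ut: "upper_triangular B"
    and dg: "diag_mat B = es" by auto
  note D = similar_mat_witD2[OF A sw]
  have "mtrace (A ^\<^sub>m m) = (\<Sum>e\<leftarrow>es. e ^ m)" for m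
  proof -
    have Bm: "B ^\<^sub>m m \<in> carrier_mat n n" using D by auto
    have "A ^\<^sub>m m = P * (B ^\<^sub>m m) * Q" using similar_mat_wit_pow_id[OF sw] by simp
    also have "\<dots> = P * ((B ^\<^sub>m m) * Q)" by (rule assoc_mult_mat[OF D(6) Bm D(7)])
    finally have "mtrace (A ^\<^sub>m m) = mtrace (P * ((B ^\<^sub>m m) * Q))" by simp
    also have "\<dots> = mtrace (((B ^\<^sub>m m) * Q) * P)"
      by (rule mtrace_comm[OF D(6)]) (use Bm D in auto)
    also have "((B ^\<^sub>m m) * Q) * P = B ^\<^sub>m m * (Q * P)" by (rule assoc_mult_mat[OF Bm D(7) D(6)])
    also have "\<dots> = B ^\<^sub>m m" using D(2) Bm by (simp add: right_mult_one_mat)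
    also have "mtrace (B ^\<^sub>m m) = (\<Sum>i<n. B $$ (i,i) ^ m)"
      using ut_pow[OF D(5) ut, of m] Bm D(5) unfolding mtrace_def by simp
    also have "\<dots> = (\<Sum>e\<leftarrow>es. e ^ m)"
      using D(5) unfolding dg[symmetric] diag_mat_def
      by (simp add: interv_sum_list_conv_sum_set_nat atLeast0LessThan comp_def)
    finally show ?thesis .
  qed
  then show ?thesis using len em by blast
qed



fun W :: "nat \<Rightarrow> (nat \<Rightarrow> nat \<Rightarrow> bool) \<Rightarrow> nat \<Rightarrow> nat \<Rightarrow> nat \<Rightarrow> real" where
  "W n E 0 x y = of_bool (x = y)"
| "W n E (Suc m) x y = (\<Sum>z<n. W n E m x z * of_bool (E z y))"

lemma adj_carrier: "adj_matrix n E \<in> carrier_mat n n"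
  by (simp add: adj_matrix_def)

lemma W_mat:
  assumes "x < n" "y < n"
  shows "(adj_matrix n E ^\<^sub>m m) $$ (x,y) = complex_of_real (W n E m x y)"
  using assms
proof (induction m arbitrary: y)
  case 0 then show ?case by (simp add: adj_matrix_def)
next
  case (Suc m)
  have "(adj_matrix n E ^\<^sub>m Suc m) $$ (x,y) = (\<Sum>z<n. (adj_matrix n E ^\<^sub>m m) $$ (x,z) * adj_matrix n E $$ (z,y))"
    using Suc.prems adj_carrier[of n E]
    by (simp add: scalar_prod_def atLeast0LessThan adj_matrix_def)
  also have "\<dots> = (\<Sum>z<n. complex_of_real (W n E m x z * of_bool (E z y)))"
    using Suc by (intro sum.cong) (auto simp: adj_matrix_def)
  also have "\<dots> = complex_of_real (W n E (Suc m) x y)" by (simp only: W.simps of_real_sum)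
  finally show ?case .
qed

definition T :: "nat \<Rightarrow> (nat \<Rightarrow> nat \<Rightarrow> bool) \<Rightarrow> nat \<Rightarrow> real" where
  "T n E m = (\<Sum>x<n. W n E m x x)"

lemma trace_T: "mtrace (adj_matrix n E ^\<^sub>m m) = complex_of_real (T n E m)"
proof -
  have "mtrace (adj_matrix n E ^\<^sub>m m) = (\<Sum>x<n. (adj_matrix n E ^\<^sub>m m) $$ (x,x))"
    using adj_carrier[of n E] by (simp add: mtrace_def)
  also have "\<dots> = (\<Sum>x<n. complex_of_real (W n E m x x))"
    by (intro sum.cong) (auto simp: W_mat)
  finally show ?thesis by (simp add: T_def)
qed

lemma cospectral_T:
  assumes "cospectral n E n' E'"
  shows "n = n' \<and> (\<forall>m. T n E m = T n' E' m)"
proof -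
  obtain es where es: "length es = n" "eigenvalue_mset (adj_matrix n E) = mset es"
    "\<forall>m. mtrace (adj_matrix n E ^\<^sub>m m) = (\<Sum>e\<leftarrow>es. e ^ m)"
    using spectral[OF adj_carrier] by blast
  obtain es' where es': "length es' = n'" "eigenvalue_mset (adj_matrix n' E') = mset es'"
    "\<forall>m. mtrace (adj_matrix n' E' ^\<^sub>m m) = (\<Sum>e\<leftarrow>es'. e ^ m)"
    using spectral[OF adj_carrier] by blast
  have ms: "mset es = mset es'" using assms es es' by (simp add: cospectral_def)
  then have "n = n'" using es es' by (metis size_mset)
  moreover have "T n E m = T n' E' m" for m
  proof -
    have "(\<Sum>e\<leftarrow>es. e ^ m) = (\<Sum>e\<leftarrow>es'. e ^ m)"
      using ms by (metis mset_map sum_mset_sum_list)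
    then have "complex_of_real (T n E m) = complex_of_real (T n' E' m)"
      using es(3) es'(3) trace_T by metis
    then show ?thesis by simp
  qed
  ultimately show ?thesis by blast
qed

lemma W_out:
  assumes "simple_graph n E" "x < n" "\<not> y < n"
  shows "W n E m x y = 0"
  using assms by (cases m) (auto simp: simple_graph_def intro!: sum.neutral)

lemma W_add:
  assumes "simple_graph n E" "x < n"
  shows "W n E (i + j) x y = (\<Sum>z<n. W n E i x z * W n E j z y)"
proof (induction j arbitrary: y)
  case 0
  show ?case
  proof (cases "y < n")
    case True
    then show ?thesis by (simp add: sum_single[of "{..<n}" y])
  next
    case False
    then show ?thesis using W_out[OF assms False] by (auto intro!: sum.neutral)
  qed
next
  case (Suc j)
  have "W n E (i + Suc j) x y = (\<Sum>w<n. W n E (i+j) x w * of_bool (E w y))" by simp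
  also have "\<dots> = (\<Sum>w<n. \<Sum>z<n. W n E i x z * W n E j z w * of_bool (E w y))"
    by (simp add: Suc sum_distrib_right del: sum_mult_of_bool_eq)
  also have "\<dots> = (\<Sum>z<n. \<Sum>w<n. W n E i x z * (W n E j z w * of_bool (E w y)))"
    by (subst sum.swap) (simp add: mult.assoc)
  also have "\<dots> = (\<Sum>z<n. W n E i x z * W n E (Suc j) z y)"
    by (simp add: sum_distrib_left del: sum_mult_of_bool_eq)
  finally show ?case .
qed

lemma W_1:
  assumes "x < n"
  shows "W n E 1 x y = of_bool (E x y)"
  using assms by (simp add: sum_single[of "{..<n}" x] del: sum_mult_of_bool_eq)

lemma W_left:
  assumes "simple_graph n E" "x < n"
  shows "W n E (Suc m) x y = (\<Sum>z<n. of_bool (E x z) * W n E m z y)"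
proof -
  have "W n E (Suc m) x y = W n E (1 + m) x y" by simp
  also have "\<dots> = (\<Sum>z<n. W n E 1 x z * W n E m z y)" by (rule W_add[OF assms])
  also have "\<dots> = (\<Sum>z<n. of_bool (E x z) * W n E m z y)"
    by (intro sum.cong refl) (simp only: W_1[OF assms(2)])
  finally show ?thesis .
qed

lemma W_sym:
  assumes sg: "simple_graph n E" and "x < n" "y < n"
  shows "W n E m x y = W n E m y x"
  using assms(2,3)
proof (induction m arbitrary: x y)
  case 0 then show ?case by auto
next
  case (Suc m)
  have "W n E (Suc m) x y = (\<Sum>z<n. W n E m x z * of_bool (E z y))" by simp
  also have "\<dots> = (\<Sum>z<n. of_bool (E y z) * W n E m z x)"
    using Suc sg by (intro sum.cong) (auto simp: simple_graph_def)
  also have "\<dots> = W n E (Suc m) y x" using W_left[OF sg Suc.prems(2)] by simp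
  finally show ?case .
qed

lemma card_nbrs: "regular n E k \<Longrightarrow> z < n \<Longrightarrow> (\<Sum>y<n. of_bool (E z y) :: real) = real k"
proof -
  assume r: "regular n E k" and z: "z < n"
  have "(\<Sum>y<n. of_bool (E z y) :: real) = real (card ({..<n} \<inter> {y. E z y}))" by simp
  also have "{..<n} \<inter> {y. E z y} = {y. y < n \<and> E z y}" by auto
  finally show ?thesis using r z unfolding regular_def by simp
qed

lemma W_rowsum:
  assumes sg: "simple_graph n E" and reg: "regular n E k" and x: "x < n"
  shows "(\<Sum>y<n. W n E m x y) = real k ^ m"
proof (induction m)
  case 0 then show ?case using x by (simp add: sum_single[of "{..<n}" x])
next
  case (Suc m)
  have "(\<Sum>y<n. W n E (Suc m) x y) = (\<Sum>z<n. W n E m x z * (\<Sum>y<n. of_bool (E z y)))"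
    by (simp add: sum_distrib_left del: sum_mult_of_bool_eq sum_of_bool_eq) (rule sum.swap)
  also have "\<dots> = (\<Sum>z<n. W n E m x z * real k)"
    using card_nbrs[OF reg] by (intro sum.cong) (auto simp del: sum_of_bool_eq)
  also have "\<dots> = real k ^ Suc m" using Suc by (simp add: sum_distrib_right[symmetric])
  finally show ?case .
qed

lemma W_2:
  assumes sg: "simple_graph n E" and "x < n" "y < n"
  shows "W n E 2 x y = real (common_nbrs n E x y)"
proof -
  have "W n E 2 x y = W n E (1 + 1) x y" by (simp only: one_add_one)
  also have "\<dots> = (\<Sum>z<n. W n E 1 x z * W n E 1 z y)" by (rule W_add[OF sg assms(2)])
  also have "\<dots> = (\<Sum>z<n. of_bool (E x z \<and> E y z))"
  proof (intro sum.cong refl)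
    fix z assume z: "z \<in> {..<n}"
    have "E z y = E y z" using sg unfolding simple_graph_def by blast
    then show "W n E 1 x z * W n E 1 z y = of_bool (E x z \<and> E y z)"
      using z by (simp only: W_1[OF assms(2)] W_1[of z n]) simp
  qed
  also have "\<dots> = real (card ({..<n} \<inter> {z. E x z \<and> E y z}))" by simp
  also have "{..<n} \<inter> {z. E x z \<and> E y z} = {z. z < n \<and> E x z \<and> E y z}" by auto
  also have "real (card \<dots>) = real (common_nbrs n E x y)" by (simp add: common_nbrs_def)
  finally show ?thesis .
qed



definition P :: "nat \<Rightarrow> (nat \<Rightarrow> nat \<Rightarrow> bool) \<Rightarrow> (nat \<Rightarrow> real) \<Rightarrow> nat \<Rightarrow> nat \<Rightarrow> nat \<Rightarrow> real" where
  "P n E c d x y = (\<Sum>i<d. c i * W n E i x y)"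

lemma sum_PP:
  assumes sg: "simple_graph n E"
  shows "(\<Sum>x<n. \<Sum>y<n. P n E c d x y * P n E c d x y) = (\<Sum>i<d. \<Sum>j<d. c i * c j * T n E (i+j))"
proof -
  have "(\<Sum>x<n. \<Sum>y<n. P n E c d x y * P n E c d x y)
     = (\<Sum>x<n. \<Sum>y<n. \<Sum>i<d. \<Sum>j<d. c i * c j * (W n E i x y * W n E j y x))"
  proof (intro sum.cong refl)
    fix x y assume x: "x \<in> {..<n}" and y: "y \<in> {..<n}"
    have "P n E c d x y * P n E c d x y = (\<Sum>i<d. \<Sum>j<d. (c i * W n E i x y) * (c j * W n E j x y))"
      unfolding P_def by (rule sum_product)
    also have "\<dots> = (\<Sum>i<d. \<Sum>j<d. c i * c j * (W n E i x y * W n E j y x))"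
      using W_sym[OF sg, of x y] x y by (intro sum.cong refl) (simp add: W_sym[OF sg, of y x] algebra_simps)
    finally show "P n E c d x y * P n E c d x y = (\<Sum>i<d. \<Sum>j<d. c i * c j * (W n E i x y * W n E j y x))" .
  qed
  also have "\<dots> = (\<Sum>x<n. \<Sum>i<d. \<Sum>y<n. \<Sum>j<d. c i * c j * (W n E i x y * W n E j y x))"
    by (rule sum.cong[OF refl], rule sum.swap)
  also have "\<dots> = (\<Sum>i<d. \<Sum>x<n. \<Sum>y<n. \<Sum>j<d. c i * c j * (W n E i x y * W n E j y x))"
    by (rule sum.swap)
  also have "\<dots> = (\<Sum>i<d. \<Sum>x<n. \<Sum>j<d. \<Sum>y<n. c i * c j * (W n E i x y * W n E j y x))"
    by (rule sum.cong[OF refl], rule sum.cong[OF refl], rule sum.swap)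
  also have "\<dots> = (\<Sum>i<d. \<Sum>j<d. \<Sum>x<n. \<Sum>y<n. c i * c j * (W n E i x y * W n E j y x))"
    by (rule sum.cong[OF refl], rule sum.swap)
  also have "\<dots> = (\<Sum>i<d. \<Sum>j<d. c i * c j * (\<Sum>x<n. \<Sum>y<n. W n E i x y * W n E j y x))"
    by (simp only: sum_distrib_left)
  also have "\<dots> = (\<Sum>i<d. \<Sum>j<d. c i * c j * T n E (i+j))"
    unfolding T_def by (intro sum.cong refl) (simp add: W_add[OF sg])
  finally show ?thesis .
qed

lemma sum_P:
  assumes sg: "simple_graph n E" and reg: "regular n E k"
  shows "(\<Sum>x<n. \<Sum>y<n. P n E c d x y) = real n * (\<Sum>i<d. c i * real k ^ i)"
proof -
  have "(\<Sum>x<n. \<Sum>y<n. P n E c d x y) = (\<Sum>i<d. c i * (\<Sum>x<n. \<Sum>y<n. W n E i x y))"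
  proof -
    have "(\<Sum>x<n. \<Sum>y<n. P n E c d x y) = (\<Sum>x<n. \<Sum>i<d. \<Sum>y<n. c i * W n E i x y)"
      unfolding P_def by (rule sum.cong[OF refl], rule sum.swap)
    also have "\<dots> = (\<Sum>i<d. \<Sum>x<n. \<Sum>y<n. c i * W n E i x y)" by (rule sum.swap)
    finally show ?thesis by (simp only: sum_distrib_left)
  qed
  also have "\<dots> = (\<Sum>i<d. c i * (\<Sum>x<n. real k ^ i))"
    by (intro sum.cong refl) (simp add: W_rowsum[OF sg reg])
  finally show ?thesis by (simp add: sum_distrib_left algebra_simps)
qed

lemma sum_sq:
  assumes sg: "simple_graph n E" and reg: "regular n E k"
  shows "(\<Sum>x<n. \<Sum>y<n. (P n E c d x y - g)\<^sup>2) =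
    (\<Sum>i<d. \<Sum>j<d. c i * c j * T n E (i+j)) - 2 * g * (real n * (\<Sum>i<d. c i * real k ^ i)) + g\<^sup>2 * real n * real n"
proof -
  have "(\<Sum>x<n. \<Sum>y<n. (P n E c d x y - g)\<^sup>2) =
     (\<Sum>x<n. \<Sum>y<n. P n E c d x y * P n E c d x y) - 2 * g * (\<Sum>x<n. \<Sum>y<n. P n E c d x y) + (\<Sum>x<n. \<Sum>y<n. g\<^sup>2)"
    by (simp add: power2_eq_square algebra_simps sum.distrib sum_subtractf sum_distrib_left)
  then show ?thesis using sum_PP[OF sg] sum_P[OF sg reg] by simp
qed

lemma transfer:
  assumes sg: "simple_graph n E" and reg: "regular n E k"
    and sg': "simple_graph n E'" and reg': "regular n E' k"
    and TT: "\<And>m. T n E m = T n E' m"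
    and id: "\<And>x y. x < n \<Longrightarrow> y < n \<Longrightarrow> P n E c d x y = g"
  shows "x < n \<Longrightarrow> y < n \<Longrightarrow> P n E' c d x y = g"
proof -
  assume x: "x < n" and y: "y < n"
  have "(\<Sum>x<n. \<Sum>y<n. (P n E c d x y - g)\<^sup>2) = 0" using id by simp
  then have z: "(\<Sum>x<n. \<Sum>y<n. (P n E' c d x y - g)\<^sup>2) = 0"
    using sum_sq[OF sg reg] sum_sq[OF sg' reg'] TT by simp
  have "(\<Sum>y<n. (P n E' c d x y - g)\<^sup>2) = 0"
    using z x by (subst (asm) sum_nonneg_eq_0_iff) (auto intro: sum_nonneg)
  then have "(P n E' c d x y - g)\<^sup>2 = 0"
    using y by (subst (asm) sum_nonneg_eq_0_iff) auto
  then show ?thesis by simp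
qed



lemma walk_Suc_right:
  "walk n E (Suc m) x y \<longleftrightarrow> (\<exists>z. walk n E m x z \<and> E z y \<and> y < n)"
proof (induction m arbitrary: x)
  case 0 then show ?case by auto
next
  case (Suc m)
  have "walk n E (Suc (Suc m)) x y \<longleftrightarrow> (\<exists>w<n. E x w \<and> walk n E (Suc m) w y)" by simp
  also have "\<dots> \<longleftrightarrow> (\<exists>w<n. E x w \<and> (\<exists>z. walk n E m w z \<and> E z y \<and> y < n))" using Suc by simp
  also have "\<dots> \<longleftrightarrow> (\<exists>z. walk n E (Suc m) x z \<and> E z y \<and> y < n)" by auto
  finally show ?case .
qed

lemma walk_trans: "walk n E m x z \<Longrightarrow> walk n E j z y \<Longrightarrow> walk n E (m + j) x y"
  by (induction m arbitrary: x) auto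

lemma walk_1: "simple_graph n E \<Longrightarrow> walk n E 1 x y \<longleftrightarrow> E x y"
  by (auto simp: simple_graph_def)

lemma walk_2: "simple_graph n E \<Longrightarrow> walk n E 2 x y \<longleftrightarrow> (\<exists>z<n. E x z \<and> E z y)"
  by (auto simp: simple_graph_def numeral_2_eq_2)

lemma walk_3: "walk n E 3 x y \<longleftrightarrow> (\<exists>z<n. E x z \<and> walk n E 2 z y)"
  by (simp add: numeral_3_eq_3 numeral_2_eq_2)

lemma gdist_le: "walk n E m x y \<Longrightarrow> gdist n E x y \<le> m"
  unfolding gdist_def by (rule Least_le)

lemma gdist_walk: "walk n E m x y \<Longrightarrow> walk n E (gdist n E x y) x y"
  unfolding gdist_def by (rule LeastI)

lemma gdist_eq: "walk n E m x y \<Longrightarrow> (\<And>j. j < m \<Longrightarrow> \<not> walk n E j x y) \<Longrightarrow> gdist n E x y = m"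
  unfolding gdist_def by (rule Least_equality) (auto simp: not_less[symmetric])

lemma common_pos:
  assumes sg: "simple_graph n E"
  shows "common_nbrs n E x y > 0 \<longleftrightarrow> (\<exists>z<n. E x z \<and> E z y)"
proof -
  have "common_nbrs n E x y > 0 \<longleftrightarrow> {z. z < n \<and> E x z \<and> E y z} \<noteq> {}"
    unfolding common_nbrs_def by (subst card_gt_0_iff) auto
  also have "\<dots> \<longleftrightarrow> (\<exists>z<n. E x z \<and> E z y)" using sg unfolding simple_graph_def by blast
  finally show ?thesis .
qed

lemma common_sym: "common_nbrs n E x y = common_nbrs n E y x"
  unfolding common_nbrs_def by (rule arg_cong[where f=card]) auto

lemma gd0: "gdist n E x x = 0"
  by (rule gdist_eq[of _ _ 0]) auto

lemma gd1: assumes sg: "simple_graph n E" and "E x y" shows "gdist n E x y = 1"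
proof (rule gdist_eq[of _ _ 1])
  show "walk n E 1 x y" using assms walk_1 by blast
  fix j assume "j < (1::nat)" then show "\<not> walk n E j x y" using assms by (auto simp: simple_graph_def)
qed

lemma gd2: assumes sg: "simple_graph n E" and "x \<noteq> y" "\<not> E x y" "common_nbrs n E x y > 0"
  shows "gdist n E x y = 2"
proof (rule gdist_eq[of _ _ 2])
  show "walk n E 2 x y" using walk_2[OF sg] common_pos[OF sg] assms(4) by blast
  fix j assume "j < (2::nat)" then have "j = 0 \<or> j = 1" by auto
  then show "\<not> walk n E j x y" using assms(2,3) walk_1[OF sg, of x y] by (metis walk.simps(1))
qed

lemma gd3: assumes sg: "simple_graph n E" and "x \<noteq> y" "\<not> E x y" "common_nbrs n E x y = 0"
    and w: "walk n E m x y"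
  shows "gdist n E x y \<ge> 3"
proof -
  have w': "walk n E (gdist n E x y) x y" using gdist_walk[OF w] .
  have "gdist n E x y \<noteq> 0" using w' assms(2) by (metis walk.simps(1))
  moreover have "gdist n E x y \<noteq> 1" using w' assms(3) walk_1[OF sg, of x y] by metis
  moreover have "\<not> walk n E 2 x y" using assms(4) walk_2[OF sg, of x y] common_pos[OF sg, of x y] by simp
  then have "gdist n E x y \<noteq> 2" using w' by metis
  ultimately show ?thesis by linarith
qed



lemma sum_delta_r: "y < (n::nat) \<Longrightarrow> (\<Sum>z<n. f z * of_bool (z = y)) = (f y :: real)"
proof -
  assume y: "y < n"
  have "(\<Sum>z<n. f z * of_bool (z = y)) = f y * of_bool (y = y)" by (rule sum_single) (use y in auto)
  then show ?thesis by (simp del: sum_mult_of_bool_eq)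
qed

lemma sum_delta_l: "x < (n::nat) \<Longrightarrow> (\<Sum>z<n. of_bool (x = z) * f z) = (f x :: real)"
proof -
  assume x: "x < n"
  have "(\<Sum>z<n. of_bool (x = z) * f z) = of_bool (x = x) * f x" by (rule sum_single) (use x in auto)
  then show ?thesis by (simp del: sum_of_bool_mult_eq)
qed

lemma quad:
  fixes F H :: "nat \<Rightarrow> nat \<Rightarrow> real"
  assumes HF: "\<And>x y. x < n \<Longrightarrow> y < n \<Longrightarrow> H x y = u * F x y + v * of_bool (x = y) + w"
    and rs: "\<And>x. x < n \<Longrightarrow> (\<Sum>z<n. F x z) = s"
    and cs: "\<And>y. y < n \<Longrightarrow> (\<Sum>z<n. F z y) = s"
    and FF: "\<And>x y. x < n \<Longrightarrow> y < n \<Longrightarrow> (\<Sum>z<n. F x z * F z y) = p * F x y + q * of_bool (x = y) + r"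
    and u: "u \<noteq> 0"
  shows "\<exists>p' q' r'. \<forall>x<n. \<forall>y<n. (\<Sum>z<n. H x z * H z y) = p' * H x y + q' * of_bool (x = y) + r'"
proof -
  define p' where "p' = u * p + 2 * v"
  define q' where "q' = u * u * q + v * v - p' * v"
  define r' where "r' = u * u * r + 2 * u * w * s + 2 * v * w + w * w * real n - p' * w"
  have "(\<Sum>z<n. H x z * H z y) = p' * H x y + q' * of_bool (x = y) + r'" if x: "x < n" and y: "y < n" for x y
  proof -
    have "(\<Sum>z<n. H x z * H z y) = (\<Sum>z<n. u * u * (F x z * F z y) + u * v * (F x z * of_bool (z = y))
       + u * w * F x z + v * u * (of_bool (x = z) * F z y) + v * v * (of_bool (x = z) * of_bool (z = y))
       + v * w * of_bool (x = z) + w * u * F z y + w * v * of_bool (z = y) + w * w)"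
      using x y by (intro sum.cong refl) (simp add: HF algebra_simps del: of_bool_eq)
    also have "\<dots> = u * u * (\<Sum>z<n. F x z * F z y) + u * v * (\<Sum>z<n. F x z * of_bool (z = y))
       + u * w * (\<Sum>z<n. F x z) + v * u * (\<Sum>z<n. of_bool (x = z) * F z y)
       + v * v * (\<Sum>z<n. of_bool (x = z) * of_bool (z = y))
       + v * w * (\<Sum>z<n. of_bool (x = z)) + w * u * (\<Sum>z<n. F z y) + w * v * (\<Sum>z<n. of_bool (z = y) :: real) + w * w * real n"
      by (simp only: sum.distrib sum_distrib_left[symmetric] sum_constant card_lessThan) (simp add: algebra_simps)
    also have "\<dots> = u * u * (p * F x y + q * of_bool (x = y) + r) + u * v * F x y + u * w * s + v * u * F x y
       + v * v * of_bool (x = y) + v * w + w * u * s + w * v + w * w * real n"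
      using x y by (simp only: FF rs cs sum_delta_r sum_delta_l) (simp add: sum_single[of _ x] sum_single[of _ y])
    also have "\<dots> = p' * H x y + q' * of_bool (x = y) + r'"
      using x y unfolding p'_def q'_def r'_def HF[OF x y] by (simp add: algebra_simps)
    finally show ?thesis .
  qed
  then show ?thesis by blast
qed

lemma ind_sum_common:
  assumes sg: "simple_graph n Z" and x: "x < n" and y: "y < n"
  shows "(\<Sum>z<n. of_bool (Z x z) * of_bool (Z z y)) = real (common_nbrs n Z x y)"
proof -
  have "(\<Sum>z<n. of_bool (Z x z) * of_bool (Z z y)) = (\<Sum>z<n. W n Z 1 x z * W n Z 1 z y)"
    by (intro sum.cong refl) (simp only: W_1[OF x] W_1[of _ n Z]; simp)
  also have "\<dots> = W n Z (1 + 1) x y" by (rule W_add[OF sg x, symmetric])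
  also have "\<dots> = W n Z 2 x y" by (simp only: one_add_one)
  finally show ?thesis using W_2[OF sg x y] by simp
qed

lemma srg_from:
  assumes sg: "simple_graph n Z"
    and id: "\<And>x y. x < n \<Longrightarrow> y < n \<Longrightarrow> real (common_nbrs n Z x y) = p * of_bool (Z x y) + q * of_bool (x = y) + r"
    and e: "a < n" "b < n" "Z a b" and ne: "c < n" "d < n" "c \<noteq> d" "\<not> Z c d"
  shows "strongly_regular n Z"
proof -
  have deg: "card {y. y < n \<and> Z x y} = common_nbrs n Z x x" for x
    unfolding common_nbrs_def by simp
  have reg: "regular n Z (common_nbrs n Z a a)"
    unfolding regular_def
  proof (intro allI impI)
    fix x assume x: "x < n"
    have "\<not> Z x x" "\<not> Z a a" using sg by (auto simp: simple_graph_def)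
    then have "real (common_nbrs n Z x x) = real (common_nbrs n Z a a)"
      using id[OF x x] id[OF e(1) e(1)] by simp
    then show "card {y. y < n \<and> Z x y} = common_nbrs n Z a a" using deg by simp
  qed
  have l: "\<forall>x<n. \<forall>y<n. Z x y \<longrightarrow> common_nbrs n Z x y = common_nbrs n Z a b"
  proof (intro allI impI)
    fix x y assume "x < n" "y < n" "Z x y"
    moreover have "a \<noteq> b" "x \<noteq> y" using sg e \<open>Z x y\<close> by (auto simp: simple_graph_def)
    ultimately have "real (common_nbrs n Z x y) = real (common_nbrs n Z a b)"
      using id[of x y] id[OF e(1,2)] e by simp
    then show "common_nbrs n Z x y = common_nbrs n Z a b" by simp
  qed
  have m: "\<forall>x<n. \<forall>y<n. x \<noteq> y \<longrightarrow> \<not> Z x y \<longrightarrow> common_nbrs n Z x y = common_nbrs n Z c d"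
  proof (intro allI impI)
    fix x y assume "x < n" "y < n" "x \<noteq> y" "\<not> Z x y"
    then have "real (common_nbrs n Z x y) = real (common_nbrs n Z c d)"
      using id[of x y] id[OF ne(1,2)] ne by simp
    then show "common_nbrs n Z x y = common_nbrs n Z c d" by simp
  qed
  have "\<not> complete_graph n Z" using ne unfolding complete_graph_def by blast
  moreover have "\<not> edgeless n Z" using e unfolding edgeless_def by blast
  ultimately have "srg n Z (common_nbrs n Z a a) (common_nbrs n Z a b) (common_nbrs n Z c d)"
    unfolding srg_def using sg reg l m by blast
  then show ?thesis unfolding strongly_regular_def by blast
qed



abbreviation dl :: "nat \<Rightarrow> nat \<Rightarrow> real" where "dl x y \<equiv> of_bool (x = y)"

lemma common_self: "common_nbrs n E x x = card {z. z < n \<and> E x z}"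
  unfolding common_nbrs_def by simp

lemma common_self_reg: "regular n E k \<Longrightarrow> x < n \<Longrightarrow> common_nbrs n E x x = k"
  unfolding regular_def common_self by simp

lemma T2: assumes sg: "simple_graph n E" and reg: "regular n E k"
  shows "T n E 2 = real n * real k"
proof -
  have "T n E 2 = (\<Sum>x<n. real k)" unfolding T_def
    by (intro sum.cong refl) (simp add: W_2[OF sg] common_self_reg[OF reg])
  then show ?thesis by simp
qed

lemma childA_B:
  assumes "deza n E k b a" "x < n" "y < n"
  shows "(of_bool (childA n E b a x y) :: real) = 1 - dl x y - of_bool (childB n E b a x y)"
  using assms by (cases "x = y") (auto simp: childA_def childB_def deza_def)

lemma W2_deza:
  assumes sg: "simple_graph n E" and dz: "deza n E k b a" and ba: "b > a" and x: "x < n" and y: "y < n"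
  shows "W n E 2 x y = real a + (real k - real a) * dl x y + (real b - real a) * of_bool (childB n E b a x y)"
proof (cases "x = y")
  case True
  then show ?thesis using W_2[OF sg x y] common_self_reg[of n E k x] dz x
    by (simp add: deza_def childB_def)
next
  case False
  then have "common_nbrs n E x y = b \<or> common_nbrs n E x y = a" using dz x y by (simp add: deza_def)
  then show ?thesis using W_2[OF sg x y] False ba x y by (auto simp: childB_def)
qed

lemma P5: "P n E cf 5 x y = cf 0 * W n E 0 x y + cf 1 * W n E 1 x y + cf 2 * W n E 2 x y + cf 3 * W n E 3 x y + cf 4 * W n E 4 x y"
  by (simp add: P_def eval_nat_numeral)

lemma P3: "P n E cf 3 x y = cf 0 * W n E 0 x y + cf 1 * W n E 1 x y + cf 2 * W n E 2 x y"
  by (simp add: P_def eval_nat_numeral)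

lemma W22: assumes sg: "simple_graph n E" and x: "x < n"
  shows "(\<Sum>z<n. W n E 2 x z * W n E 2 z y) = W n E 4 x y"
  using W_add[OF sg x, of 2 2 y] by simp

lemma W2_rowsum: "simple_graph n E \<Longrightarrow> regular n E k \<Longrightarrow> x < n \<Longrightarrow> (\<Sum>z<n. W n E 2 x z) = real k ^ 2"
  by (rule W_rowsum)

lemma W2_colsum: assumes sg: "simple_graph n E" and reg: "regular n E k" and y: "y < n"
  shows "(\<Sum>z<n. W n E 2 z y) = real k ^ 2"
proof -
  have "(\<Sum>z<n. W n E 2 z y) = (\<Sum>z<n. W n E 2 y z)" using y by (intro sum.cong refl) (simp add: W_sym[OF sg])
  then show ?thesis using W_rowsum[OF sg reg y] by simp
qed

lemma srg_quad:
  assumes "strongly_regular n Z"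
  shows "\<exists>s p q r. (\<forall>x<n. (\<Sum>z<n. of_bool (Z x z) :: real) = s) \<and> (\<forall>y<n. (\<Sum>z<n. of_bool (Z z y) :: real) = s) \<and>
     (\<forall>x<n. \<forall>y<n. (\<Sum>z<n. of_bool (Z x z) * of_bool (Z z y)) = p * of_bool (Z x y) + q * dl x y + r)"
proof -
  obtain k l m where S: "srg n Z k l m" using assms unfolding strongly_regular_def by blast
  then have sg: "simple_graph n Z" and reg: "regular n Z k" unfolding srg_def by auto
  have sym: "Z x y = Z y x" for x y using sg unfolding simple_graph_def by blast
  have rs: "(\<Sum>z<n. of_bool (Z x z) :: real) = real k" if "x < n" for x
    using card_nbrs[OF reg that] by simp
  have cs: "(\<Sum>z<n. of_bool (Z z y) :: real) = real k" if "y < n" for y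
    using rs[OF that] by (simp add: sym)
  have "(\<Sum>z<n. of_bool (Z x z) * of_bool (Z z y)) = (real l - real m) * of_bool (Z x y) + (real k - real m) * dl x y + real m"
    if x: "x < n" and y: "y < n" for x y
  proof -
    have e: "(\<Sum>z<n. of_bool (Z x z) * of_bool (Z z y)) = real (common_nbrs n Z x y)"
      by (rule ind_sum_common[OF sg x y])
    show ?thesis
    proof (cases "x = y")
      case True
      have "\<not> Z x x" using sg by (auto simp: simple_graph_def)
      then show ?thesis using e common_self_reg[OF reg x] True by simp
    next
      case False
      then show ?thesis using e S x y by (cases "Z x y") (auto simp: srg_def)
    qed
  qed
  then show ?thesis using rs cs by blast
qed

lemma const_common:
  assumes sg: "simple_graph n E" and reg: "regular n E k"
    and sg': "simple_graph n E'" and reg': "regular n E' k"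
    and TT: "\<And>m. T n E m = T n E' m"
    and c: "\<And>x y. x < n \<Longrightarrow> y < n \<Longrightarrow> x \<noteq> y \<Longrightarrow> common_nbrs n E x y = t"
    and x: "x < n" and y: "y < n" and xy: "x \<noteq> y"
  shows "common_nbrs n E' x y = t"
proof -
  define cf where "cf = (\<lambda>i::nat. if i = 0 then - (real k - real t) else if i = 2 then 1 else (0::real))"
  have "P n E cf 3 x y = real t" if "x < n" "y < n" for x y
    using that c[of x y] W_2[OF sg that] common_self_reg[OF reg that(1)]
    by (cases "x = y") (auto simp: P3 cf_def)
  then have "P n E' cf 3 x y = real t" by (rule transfer[OF sg reg sg' reg' TT _ x y])
  then show ?thesis using W_2[OF sg' x y] xy by (simp add: P3 cf_def)
qed

lemma sg_childA: "simple_graph n (childA n E b a)"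
  unfolding simple_graph_def childA_def using common_sym by metis

lemma sg_childB: "simple_graph n (childB n E b a)"
  unfolding simple_graph_def childB_def using common_sym by metis

lemma srg_child:
  assumes sg': "simple_graph n E'" and reg': "regular n E' k"
    and W4: "\<And>x y. x < n \<Longrightarrow> y < n \<Longrightarrow> W n E' 4 x y = p * W n E' 2 x y + q * dl x y + r"
    and HF: "\<And>x y. x < n \<Longrightarrow> y < n \<Longrightarrow> of_bool (Z x y) = u * W n E' 2 x y + v * dl x y + w"
    and u: "u \<noteq> 0" and sgZ: "simple_graph n Z"
    and e: "a < n" "b < n" "Z a b" and ne: "c < n" "d < n" "c \<noteq> d" "\<not> Z c d"
  shows "strongly_regular n Z"
proof -
  have "\<exists>p' q' r'. \<forall>x<n. \<forall>y<n. (\<Sum>z<n. of_bool (Z x z) * of_bool (Z z y) :: real) = p' * of_bool (Z x y) + q' * dl x y + r'"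
    by (rule quad[where n=n and H="\<lambda>x y. of_bool (Z x y)" and F="W n E' 2" and
          u=u and v=v and w=w and s="real k ^ 2" and p=p and q=q and r=r])
       (use HF W2_rowsum[OF sg' reg'] W2_colsum[OF sg' reg'] W22[OF sg'] W4 u in auto)
  then obtain p' q' r' where Q: "\<forall>x<n. \<forall>y<n. (\<Sum>z<n. of_bool (Z x z) * of_bool (Z z y)) = p' * of_bool (Z x y) + q' * dl x y + r'"
    by blast
  show ?thesis
    by (rule srg_from[OF sgZ _ e ne, of p' q' r']) (use Q ind_sum_common[OF sgZ] in auto)
qed

lemma partA:
  assumes sg: "simple_graph n E" and dz: "deza n E k c 0"
    and SA: "strongly_regular n (childA n E c 0)" and SB: "strongly_regular n (childB n E c 0)"
    and sg': "simple_graph n E'" and dz': "deza n E' k b' a'" and TT: "\<And>m. T n E m = T n E' m"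
  shows "strongly_deza n E' k b' a' \<and> a' < b' \<and> (\<exists>x<n. \<exists>y<n. x \<noteq> y \<and> common_nbrs n E' x y = a')"
proof -
  have reg: "regular n E k" and reg': "regular n E' k" using dz dz' by (auto simp: deza_def)
  obtain a0 b0 where A0: "childA n E c 0 a0 b0"
    using SA unfolding strongly_regular_def srg_def edgeless_def by blast
  obtain a1 b1 where B1: "childB n E c 0 a1 b1"
    using SB unfolding strongly_regular_def srg_def edgeless_def by blast
  have c0: "c > 0" using B1 by (auto simp: childB_def split: if_splits)
  have A0': "a0 < n" "b0 < n" "a0 \<noteq> b0" "common_nbrs n E a0 b0 = 0" using A0 c0 by (auto simp: childA_def)
  have B1': "a1 < n" "b1 < n" "a1 \<noteq> b1" "common_nbrs n E a1 b1 = c" using B1 c0 by (auto simp: childB_def)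
  have TT': "\<And>m. T n E' m = T n E m" using TT by simp
  have N1: "\<exists>x<n. \<exists>y<n. x \<noteq> y \<and> common_nbrs n E' x y \<noteq> a'"
  proof (rule ccontr)
    assume "\<not> ?thesis"
    then have "\<And>x y. x < n \<Longrightarrow> y < n \<Longrightarrow> x \<noteq> y \<Longrightarrow> common_nbrs n E' x y = a'" by blast
    from const_common[OF sg' reg' sg reg TT' this] A0' B1' c0 show False by force
  qed
  then obtain x1 y1 where xy1: "x1 < n" "y1 < n" "x1 \<noteq> y1" "common_nbrs n E' x1 y1 = b'" "b' \<noteq> a'"
    using dz' unfolding deza_def by metis
  then have ba: "a' < b'" using dz' by (auto simp: deza_def)
  have N2: "\<exists>x<n. \<exists>y<n. x \<noteq> y \<and> common_nbrs n E' x y \<noteq> b'"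
  proof (rule ccontr)
    assume "\<not> ?thesis"
    then have "\<And>x y. x < n \<Longrightarrow> y < n \<Longrightarrow> x \<noteq> y \<Longrightarrow> common_nbrs n E' x y = b'" by blast
    from const_common[OF sg' reg' sg reg TT' this] A0' B1' c0 show False by force
  qed
  then obtain x2 y2 where xy2: "x2 < n" "y2 < n" "x2 \<noteq> y2" "common_nbrs n E' x2 y2 = a'"
    using dz' unfolding deza_def by metis
  have W2G: "W n E 2 x y = (- real c) * of_bool (childA n E c 0 x y) + (real k - real c) * dl x y + real c"
    if "x < n" "y < n" for x y
  proof -
    have B: "(of_bool (childB n E c 0 x y) :: real) = 1 - dl x y - of_bool (childA n E c 0 x y)"
      using childA_B[OF dz that] by linarith
    have "W n E 2 x y = real k * dl x y + real c * (1 - dl x y - of_bool (childA n E c 0 x y))"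
      using W2_deza[OF sg dz c0 that] B by simp
    then show ?thesis by (simp add: algebra_simps)
  qed
  obtain s p q r where S: "\<forall>x<n. (\<Sum>z<n. of_bool (childA n E c 0 x z) :: real) = s"
    "\<forall>y<n. (\<Sum>z<n. of_bool (childA n E c 0 z y) :: real) = s"
    "\<forall>x<n. \<forall>y<n. (\<Sum>z<n. of_bool (childA n E c 0 x z) * of_bool (childA n E c 0 z y)) = p * of_bool (childA n E c 0 x y) + q * dl x y + r"
    using srg_quad[OF SA] by blast
  have "\<exists>p' q' r'. \<forall>x<n. \<forall>y<n. (\<Sum>z<n. W n E 2 x z * W n E 2 z y) = p' * W n E 2 x y + q' * dl x y + r'"
    by (rule quad[where n=n and H="W n E 2" and F="\<lambda>x y. of_bool (childA n E c 0 x y)" and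
          u="- real c" and v="real k - real c" and w="real c" and s=s and p=p and q=q and r=r])
       (use W2G S c0 in auto)
  then obtain p1 q1 r1 where Q1: "\<forall>x<n. \<forall>y<n. (\<Sum>z<n. W n E 2 x z * W n E 2 z y) = p1 * W n E 2 x y + q1 * dl x y + r1"
    by blast
  define cf where "cf = (\<lambda>i::nat. if i = 0 then - q1 else if i = 2 then - p1 else if i = 4 then 1 else (0::real))"
  have PG: "P n E cf 5 x y = r1" if "x < n" "y < n" for x y
    using Q1 that W22[OF sg, of x y] by (simp add: P5 cf_def)
  have W4': "W n E' 4 x y = p1 * W n E' 2 x y + q1 * dl x y + r1" if x: "x < n" and y: "y < n" for x y
  proof -
    have "P n E' cf 5 x y = r1" by (rule transfer[OF sg reg sg' reg' TT PG x y])
    then show ?thesis by (simp add: P5 cf_def)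
  qed
  define d where "d = real b' - real a'"
  have d: "d \<noteq> 0" "d > 0" using ba by (auto simp: d_def)
  have HB: "of_bool (childB n E' b' a' x y) = (1 / d) * W n E' 2 x y + (- (real k - real a') / d) * dl x y + (- real a' / d)"
    if "x < n" "y < n" for x y
  proof -
    have e: "W n E' 2 x y = real a' + (real k - real a') * dl x y + d * of_bool (childB n E' b' a' x y)"
      using W2_deza[OF sg' dz' ba that] by (simp add: d_def)
    show ?thesis unfolding e using d(1) by (simp add: field_simps)
  qed
  have HA: "of_bool (childA n E' b' a' x y) = (- 1 / d) * W n E' 2 x y + ((real k - real a') / d - 1) * dl x y + (1 + real a' / d)"
    if "x < n" "y < n" for x y
  proof -
    have e: "(of_bool (childA n E' b' a' x y) :: real) = 1 - dl x y - of_bool (childB n E' b' a' x y)"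
      using childA_B[OF dz' that] by simp
    show ?thesis unfolding e HB[OF that] using d(1) by (simp add: field_simps)
  qed
  have SRB: "strongly_regular n (childB n E' b' a')"
    by (rule srg_child[OF sg' reg' W4' HB _ sg_childB, of x1 y1 x2 y2]) (use d xy1 xy2 ba in \<open>auto simp: childB_def\<close>)
  have SRA: "strongly_regular n (childA n E' b' a')"
    by (rule srg_child[OF sg' reg' W4' HA _ sg_childA, of x2 y2 x1 y1]) (use d xy1 xy2 ba in \<open>auto simp: childA_def\<close>)
  show ?thesis using SRA SRB dz' ba xy2 unfolding strongly_deza_def by blast
qed



definition R3 :: "nat \<Rightarrow> (nat \<Rightarrow> nat \<Rightarrow> bool) \<Rightarrow> nat \<Rightarrow> nat \<Rightarrow> bool" where
  "R3 n E x y \<longleftrightarrow> x \<noteq> y \<and> common_nbrs n E x y = 0"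

definition R2 :: "nat \<Rightarrow> (nat \<Rightarrow> nat \<Rightarrow> bool) \<Rightarrow> nat \<Rightarrow> nat \<Rightarrow> nat \<Rightarrow> bool" where
  "R2 n E c x y \<longleftrightarrow> x \<noteq> y \<and> \<not> E x y \<and> common_nbrs n E x y = c"

definition rel :: "nat \<Rightarrow> (nat \<Rightarrow> nat \<Rightarrow> bool) \<Rightarrow> nat \<Rightarrow> nat \<Rightarrow> nat \<Rightarrow> nat" where
  "rel n E c x y = (if x = y then 0 else if E x y then 1 else if R2 n E c x y then 2 else 3)"

definition bR :: "nat \<Rightarrow> nat \<Rightarrow> nat \<Rightarrow> nat \<Rightarrow> nat \<Rightarrow> real" where
  "bR k c b2 a3 i = (if i = 0 then real k else if i = 1 then real k - 1 - real c else if i = 2 then real b2 else 0)"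
definition aR :: "nat \<Rightarrow> nat \<Rightarrow> nat \<Rightarrow> nat \<Rightarrow> nat \<Rightarrow> real" where
  "aR k c b2 a3 i = (if i = 0 then 0 else if i = 1 then real c else if i = 2 then real k - real c - real b2 else real a3)"
definition cR :: "nat \<Rightarrow> nat \<Rightarrow> nat \<Rightarrow> nat \<Rightarrow> nat \<Rightarrow> real" where
  "cR k c b2 a3 i = (if i = 0 then 0 else if i = 1 then 1 else if i = 2 then real c else real k - real a3)"

lemma cardR: "real (card {z. z < (n::nat) \<and> Q z}) = (\<Sum>z<n. of_bool (Q z))"
proof -
  have "(\<Sum>z<n. of_bool (Q z) :: real) = real (card ({..<n} \<inter> {z. Q z}))" by simp
  also have "{..<n} \<inter> {z. Q z} = {z. z < n \<and> Q z}" by auto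
  finally show ?thesis by simp
qed

locale HG =
  fixes n :: nat and E :: "nat \<Rightarrow> nat \<Rightarrow> bool" and k c b2 a3 :: nat
  assumes sg: "simple_graph n E" and reg: "regular n E k" and c0: "c > 0"
    and dz: "\<And>x y. x < n \<Longrightarrow> y < n \<Longrightarrow> x \<noteq> y \<Longrightarrow> common_nbrs n E x y = c \<or> common_nbrs n E x y = 0"
    and edge: "\<And>x y. E x y \<Longrightarrow> common_nbrs n E x y = c"
    and cnt: "\<And>x y. x < n \<Longrightarrow> y < n \<Longrightarrow> real (card {z. z < n \<and> E x z \<and> R3 n E z y})
        = real b2 * of_bool (R2 n E c x y) + real a3 * of_bool (R3 n E x y)"
    and a3k: "a3 < k"
    and ex3: "\<exists>x<n. \<exists>y<n. R3 n E x y"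
begin

lemma symE: "E x y = E y x" using sg unfolding simple_graph_def by blast

lemma Ebound: "E x y \<Longrightarrow> x < n \<and> y < n \<and> x \<noteq> y" using sg unfolding simple_graph_def by blast

lemma R3_sym: "R3 n E x y = R3 n E y x" unfolding R3_def using common_sym by metis

lemma R2_sym: "R2 n E c x y = R2 n E c y x" unfolding R2_def using common_sym symE by metis

lemma R3_noE: "R3 n E x y \<Longrightarrow> \<not> E x y" using edge c0 unfolding R3_def by force

lemma R3_R2: "R3 n E x y \<Longrightarrow> \<not> R2 n E c x y" using c0 unfolding R3_def R2_def by auto

lemma exhaust: "x < n \<Longrightarrow> y < n \<Longrightarrow> x = y \<or> E x y \<or> R2 n E c x y \<or> R3 n E x y"
  using dz[of x y] unfolding R2_def R3_def by auto

lemma R2_pos: "R2 n E c x y \<Longrightarrow> common_nbrs n E x y > 0" using c0 unfolding R2_def by auto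

lemma rel_le: "rel n E c x y \<le> 3" unfolding rel_def by auto

lemma rel_3: "x < n \<Longrightarrow> y < n \<Longrightarrow> rel n E c x y = 3 \<longleftrightarrow> R3 n E x y"
proof -
  assume x: "x < n" and y: "y < n"
  show ?thesis
  proof
    assume "rel n E c x y = 3"
    then have "x \<noteq> y" "\<not> E x y" "\<not> R2 n E c x y" unfolding rel_def by (auto split: if_splits)
    then show "R3 n E x y" using exhaust[OF x y] by blast
  next
    assume r: "R3 n E x y"
    then have "x \<noteq> y" unfolding R3_def by simp
    then show "rel n E c x y = 3" using R3_noE[OF r] R3_R2[OF r] unfolding rel_def by simp
  qed
qed

lemma cnt_R3: assumes "x < n" "y < n" "R3 n E x y"
  shows "card {z. z < n \<and> E x z \<and> R3 n E z y} = a3"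
  using cnt[OF assms(1,2)] assms(3) R3_R2[OF assms(3)] by simp

lemma cnt_R2: assumes "x < n" "y < n" "R2 n E c x y"
  shows "card {z. z < n \<and> E x z \<and> R3 n E z y} = b2"
proof -
  have "\<not> R3 n E x y" using R3_R2 assms(3) by blast
  then show ?thesis using cnt[OF assms(1,2)] assms(3) by simp
qed

lemma R3_nbr:
  assumes x: "x < n" and y: "y < n" and r: "R3 n E x y"
  shows "\<exists>z<n. E x z \<and> R2 n E c z y"
proof -
  have ca: "card {z. z < n \<and> E x z \<and> R3 n E z y} = a3" by (rule cnt_R3[OF x y r])
  have ck: "card {z. z < n \<and> E x z} = k" using reg x unfolding regular_def by blast
  obtain z where z: "z < n" "E x z" "\<not> R3 n E z y"
  proof (rule ccontr)
    assume "\<not> thesis"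
    then have "\<forall>z. z < n \<and> E x z \<longrightarrow> R3 n E z y" using that by blast
    then have "{z. z < n \<and> E x z \<and> R3 n E z y} = {z. z < n \<and> E x z}" by blast
    then show False using ca ck a3k by simp
  qed
  have "\<not> E x y" using R3_noE[OF r] .
  then have zy: "z \<noteq> y" using z by auto
  have "\<not> E z y"
  proof
    assume "E z y"
    then have "common_nbrs n E x y > 0" using common_pos[OF sg] z by blast
    then show False using r unfolding R3_def by simp
  qed
  then have "R2 n E c z y" using exhaust[OF z(1) y] zy z(3) by blast
  then show ?thesis using z by blast
qed

lemma gdist_rel:
  assumes x: "x < n" and y: "y < n"
  shows "gdist n E x y = rel n E c x y \<and> walk n E (rel n E c x y) x y"
proof -
  consider "x = y" | "x \<noteq> y" "E x y" | "x \<noteq> y" "\<not> E x y" "R2 n E c x y" | "R3 n E x y"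
    using exhaust[OF x y] by blast
  then show ?thesis
  proof cases
    case 1 then show ?thesis by (simp add: gd0 rel_def)
  next
    case 2 then show ?thesis using gd1[OF sg] walk_1[OF sg] by (simp add: rel_def)
  next
    case 3
    have "common_nbrs n E x y > 0" using R2_pos[OF 3(3)] .
    then show ?thesis using gd2[OF sg 3(1,2)] walk_2[OF sg] common_pos[OF sg] 3 by (simp add: rel_def)
  next
    case 4
    obtain z where z: "z < n" "E x z" "R2 n E c z y" using R3_nbr[OF x y 4] by blast
    have "walk n E 2 z y" using walk_2[OF sg] common_pos[OF sg] R2_pos[OF z(3)] by blast
    then have w: "walk n E 3 x y" using walk_3 z by blast
    have r3: "rel n E c x y = 3" using rel_3[OF x y] 4 by simp
    have "gdist n E x y \<ge> 3" using gd3[OF sg _ R3_noE[OF 4] _ w] 4 by (auto simp: R3_def)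
    moreover have "gdist n E x y \<le> 3" using gdist_le[OF w] .
    ultimately show ?thesis using w r3 by simp
  qed
qed

lemma realized: "i \<le> 3 \<Longrightarrow> \<exists>x<n. \<exists>y<n. rel n E c x y = i"
proof -
  assume i: "i \<le> 3"
  obtain x y where xy: "x < n" "y < n" "R3 n E x y" using ex3 by blast
  obtain z where z: "z < n" "E x z" "R2 n E c z y" using R3_nbr[OF xy] by blast
  have "rel n E c x x = 0" by (simp add: rel_def)
  moreover have "rel n E c x z = 1" using z Ebound by (simp add: rel_def)
  moreover have "rel n E c z y = 2" using z unfolding rel_def R2_def by auto
  moreover have "rel n E c x y = 3" using rel_3 xy by simp
  ultimately show ?thesis using i xy z by (metis le_Suc_eq numeral_3_eq_3 numeral_2_eq_2 One_nat_def le_0_eq)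
qed

lemma counts:
  assumes x: "x < n" and y: "y < n"
  shows "real (card {z. z < n \<and> E y z \<and> rel n E c x z = rel n E c x y + 1}) = bR k c b2 a3 (rel n E c x y)
    \<and> real (card {z. z < n \<and> E y z \<and> rel n E c x z = rel n E c x y}) = aR k c b2 a3 (rel n E c x y)
    \<and> real (card {z. z < n \<and> E y z \<and> rel n E c x z + 1 = rel n E c x y}) = cR k c b2 a3 (rel n E c x y)"
proof -
  define C where "C j = real (card {z. z < n \<and> E y z \<and> rel n E c x z = j})" for j
  have part: "C 0 + C 1 + C 2 + C 3 = real k"
  proof -
    have "C 0 + C 1 + C 2 + C 3 = (\<Sum>z<n. of_bool (E y z \<and> rel n E c x z = 0) + of_bool (E y z \<and> rel n E c x z = 1)
       + of_bool (E y z \<and> rel n E c x z = 2) + of_bool (E y z \<and> rel n E c x z = 3))"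
      unfolding C_def cardR by (simp add: sum.distrib del: sum_of_bool_eq)
    also have "\<dots> = (\<Sum>z<n. of_bool (E y z))"
    proof (intro sum.cong refl)
      fix z
      have "rel n E c x z = 0 \<or> rel n E c x z = 1 \<or> rel n E c x z = 2 \<or> rel n E c x z = 3"
        using rel_le[of x z] by linarith
      then show "of_bool (E y z \<and> rel n E c x z = 0) + of_bool (E y z \<and> rel n E c x z = 1)
       + of_bool (E y z \<and> rel n E c x z = 2) + of_bool (E y z \<and> rel n E c x z = 3) = (of_bool (E y z) :: real)"
        by auto
    qed
    also have "\<dots> = real k" using card_nbrs[OF reg y] .
    finally show ?thesis .
  qed
  have C0: "C 0 = of_bool (E y x)"
  proof -
    have "{z. z < n \<and> E y z \<and> rel n E c x z = 0} = (if E y x then {x} else {})"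
      using x by (auto simp: rel_def split: if_splits)
    then show ?thesis unfolding C_def by simp
  qed
  have C1: "C 1 = real (common_nbrs n E x y)"
  proof -
    have "{z. z < n \<and> E y z \<and> rel n E c x z = 1} = {z. z < n \<and> E x z \<and> E y z}"
      using Ebound by (auto simp: rel_def split: if_splits)
    then show ?thesis unfolding C_def common_nbrs_def by simp
  qed
  have C3: "C 3 = real b2 * of_bool (R2 n E c x y) + real a3 * of_bool (R3 n E x y)"
  proof -
    have "{z. z < n \<and> E y z \<and> rel n E c x z = 3} = {z. z < n \<and> E y z \<and> R3 n E z x}"
      using rel_3[OF x] R3_sym by blast
    then have "C 3 = real b2 * of_bool (R2 n E c y x) + real a3 * of_bool (R3 n E y x)"
      unfolding C_def using cnt[OF y x] by simp
    then show ?thesis using R2_sym[of y x] R3_sym[of y x] by simp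
  qed
  have C4: "real (card {z. z < n \<and> E y z \<and> rel n E c x z = 4}) = 0"
  proof -
    have "rel n E c x z \<noteq> 4" for z using rel_le[of x z] by linarith
    then have "{z. z < n \<and> E y z \<and> rel n E c x z = 4} = {}" by auto
    then show ?thesis by simp
  qed
  have C4': "C 4 = 0" using C4 unfolding C_def .
  have Gb: "real (card {z. z < n \<and> E y z \<and> rel n E c x z = rel n E c x y + 1}) = C (rel n E c x y + 1)"
    unfolding C_def ..
  have Ga: "real (card {z. z < n \<and> E y z \<and> rel n E c x z = rel n E c x y}) = C (rel n E c x y)"
    unfolding C_def ..
  have Gc: "real (card {z. z < n \<and> E y z \<and> rel n E c x z + 1 = rel n E c x y}) = C j"
    if "rel n E c x y = j + 1" for j
    unfolding C_def that by simp
  have Gc0: "real (card {z. z < n \<and> E y z \<and> rel n E c x z + 1 = rel n E c x y}) = 0"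
    if "rel n E c x y = 0"
    unfolding that by simp
  consider "x = y" | "x \<noteq> y" "E x y" | "x \<noteq> y" "\<not> E x y" "R2 n E c x y" | "R3 n E x y"
    using exhaust[OF x y] by blast
  then show ?thesis
  proof cases
    case 1
    have r: "rel n E c x y = 0" using 1 by (simp add: rel_def)
    have "C 1 = real k" using C1 1 common_self_reg[OF reg x] by simp
    moreover have "C 0 = 0" using C0 1 Ebound by auto
    ultimately show ?thesis using Gb Ga Gc0[OF r] unfolding r by (simp add: bR_def aR_def cR_def)
  next
    case 2
    have r: "rel n E c x y = 1" using 2 by (simp add: rel_def)
    have "\<not> R2 n E c x y" "\<not> R3 n E x y" using 2 R3_noE by (auto simp: R2_def)
    then have "C 3 = 0" using C3 by simp
    moreover have "C 0 = 1" using C0 2 symE by simp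
    moreover have "C 1 = real c" using C1 edge[OF 2(2)] by simp
    ultimately have "C 2 = real k - 1 - real c" using part by simp
    then have b: "C (rel n E c x y + 1) = bR k c b2 a3 (rel n E c x y)" unfolding r by (simp add: eval_nat_numeral bR_def)
    have a: "C (rel n E c x y) = aR k c b2 a3 (rel n E c x y)" using \<open>C 1 = real c\<close> unfolding r by (simp add: eval_nat_numeral aR_def)
    have c: "C 0 = cR k c b2 a3 (rel n E c x y)" using \<open>C 0 = 1\<close> unfolding r by (simp add: eval_nat_numeral cR_def)
    have r': "rel n E c x y = 0 + 1" using r by simp
    show ?thesis using Gb Ga Gc[OF r'] a b c by simp
  next
    case 3
    have r: "rel n E c x y = 2" using 3 by (simp add: rel_def)
    have "\<not> R3 n E x y" using 3 R3_R2 by blast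
    then have "C 3 = real b2" using C3 3 by simp
    moreover have "C 0 = 0" using C0 3 symE by simp
    moreover have "C 1 = real c" using C1 3 by (simp add: R2_def)
    ultimately have "C 2 = real k - real c - real b2" using part by simp
    then have a: "C (rel n E c x y) = aR k c b2 a3 (rel n E c x y)" unfolding r by (simp add: eval_nat_numeral aR_def)
    have b: "C (rel n E c x y + 1) = bR k c b2 a3 (rel n E c x y)" using \<open>C 3 = real b2\<close> unfolding r by (simp add: eval_nat_numeral bR_def)
    have c: "C 1 = cR k c b2 a3 (rel n E c x y)" using \<open>C 1 = real c\<close> unfolding r by (simp add: eval_nat_numeral cR_def)
    have r': "rel n E c x y = 1 + 1" using r by simp
    show ?thesis using Gb Ga Gc[OF r'] a b c by simp
  next
    case 4
    have r: "rel n E c x y = 3" using rel_3[OF x y] 4 by simp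
    have "\<not> R2 n E c x y" using 4 R3_R2 by blast
    then have "C 3 = real a3" using C3 4 by simp
    moreover have "C 0 = 0" using C0 R3_noE[OF 4] symE by simp
    moreover have "C 1 = 0" using C1 4 by (simp add: R3_def)
    ultimately have "C 2 = real k - real a3" using part by simp
    then have c: "C 2 = cR k c b2 a3 (rel n E c x y)" unfolding r by (simp add: eval_nat_numeral cR_def)
    have b: "C (rel n E c x y + 1) = bR k c b2 a3 (rel n E c x y)" using C4' unfolding r by (simp add: eval_nat_numeral bR_def)
    have a: "C (rel n E c x y) = aR k c b2 a3 (rel n E c x y)" using \<open>C 3 = real a3\<close> unfolding r by (simp add: eval_nat_numeral aR_def)
    have r': "rel n E c x y = 2 + 1" using r by simp
    show ?thesis using Gb Ga Gc[OF r'] a b c by simp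
  qed
qed

lemma drg:
  assumes P: "\<And>i. i \<le> 3 \<Longrightarrow> real (ai i) = aR k c b2 a3 i \<and> real (bi i) = bR k c b2 a3 i \<and> real (ci i) = cR k c b2 a3 i"
  shows "distance_regular n E 3 ai bi ci"
proof -
  obtain x0 y0 where xy0: "x0 < n" "y0 < n" "R3 n E x0 y0" using ex3 by blast
  have "\<exists>m. walk n E m x y" if "x < n" "y < n" for x y
    using gdist_rel[OF that] by blast
  then have conn: "connected_graph n E"
    unfolding connected_graph_def using xy0(1) by auto
  have d1: "\<forall>x<n. \<forall>y<n. gdist n E x y \<le> 3"
  proof (intro allI impI)
    fix x y assume "x < n" "y < n"
    then show "gdist n E x y \<le> 3" using gdist_rel[of x y] rel_le[of x y] by simp
  qed
  have d2: "gdist n E x0 y0 = 3" using gdist_rel[OF xy0(1,2)] rel_3[OF xy0(1,2)] xy0(3) by simp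
  have diam: "has_diameter n E 3"
    unfolding has_diameter_def using conn d1 d2 xy0 by blast
  have "let i = gdist n E x y in
        card {z. z < n \<and> E y z \<and> gdist n E x z = i + 1} = bi i \<and>
        card {z. z < n \<and> E y z \<and> gdist n E x z = i} = ai i \<and>
        card {z. z < n \<and> E y z \<and> gdist n E x z + 1 = i} = ci i" if x: "x < n" and y: "y < n" for x y
  proof -
    have g: "gdist n E x y = rel n E c x y" using gdist_rel[OF x y] by simp
    have eq: "{z. z < n \<and> E y z \<and> Q (gdist n E x z)} = {z. z < n \<and> E y z \<and> Q (rel n E c x z)}" for Q
      using gdist_rel[OF x] by auto
    note cs = counts[OF x y]
    have Pi: "real (ai (rel n E c x y)) = aR k c b2 a3 (rel n E c x y) \<and> real (bi (rel n E c x y)) = bR k c b2 a3 (rel n E c x y)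
      \<and> real (ci (rel n E c x y)) = cR k c b2 a3 (rel n E c x y)"
      using P rel_le by blast
    have "real (card {z. z < n \<and> E y z \<and> rel n E c x z = rel n E c x y + 1}) = real (bi (rel n E c x y))"
      "real (card {z. z < n \<and> E y z \<and> rel n E c x z = rel n E c x y}) = real (ai (rel n E c x y))"
      "real (card {z. z < n \<and> E y z \<and> rel n E c x z + 1 = rel n E c x y}) = real (ci (rel n E c x y))"
      using cs Pi by simp_all
    then show ?thesis unfolding Let_def g eq[of "\<lambda>t. t = rel n E c x y + 1"] eq[of "\<lambda>t. t = rel n E c x y"]
        eq[of "\<lambda>t. t + 1 = rel n E c x y"] of_nat_eq_iff by blast
  qed
  then show ?thesis unfolding distance_regular_def using sg diam by blast
qed

lemma params:
  assumes D: "distance_regular n E 3 ai bi ci" and i: "i \<le> 3"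
  shows "real (ai i) = aR k c b2 a3 i \<and> real (bi i) = bR k c b2 a3 i \<and> real (ci i) = cR k c b2 a3 i"
proof -
  obtain x y where xy: "x < n" "y < n" "rel n E c x y = i" using realized[OF i] by blast
  have g: "gdist n E x y = i" using gdist_rel[OF xy(1,2)] xy(3) by simp
  have eq: "{z. z < n \<and> E y z \<and> Q (gdist n E x z)} = {z. z < n \<and> E y z \<and> Q (rel n E c x z)}" for Q
    using gdist_rel[OF xy(1)] by auto
  have "\<forall>x<n. \<forall>y<n. let i = gdist n E x y in
        card {z. z < n \<and> E y z \<and> gdist n E x z = i + 1} = bi i \<and>
        card {z. z < n \<and> E y z \<and> gdist n E x z = i} = ai i \<and>
        card {z. z < n \<and> E y z \<and> gdist n E x z + 1 = i} = ci i"
    using D unfolding distance_regular_def by blast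
  then have "let i = gdist n E x y in
        card {z. z < n \<and> E y z \<and> gdist n E x z = i + 1} = bi i \<and>
        card {z. z < n \<and> E y z \<and> gdist n E x z = i} = ai i \<and>
        card {z. z < n \<and> E y z \<and> gdist n E x z + 1 = i} = ci i"
    using xy by blast
  then have "card {z. z < n \<and> E y z \<and> gdist n E x z = i + 1} = bi i \<and>
        card {z. z < n \<and> E y z \<and> gdist n E x z = i} = ai i \<and>
        card {z. z < n \<and> E y z \<and> gdist n E x z + 1 = i} = ci i"
    unfolding Let_def g .
  then show ?thesis using counts[OF xy(1,2)] xy(3)
    unfolding eq[of "\<lambda>t. t = i + 1"] eq[of "\<lambda>t. t = i"] eq[of "\<lambda>t. t + 1 = i"] by simp
qed

end



lemma T3: assumes sg: "simple_graph n E"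
  shows "T n E 3 = (\<Sum>x<n. \<Sum>z<n. of_bool (E x z) * real (common_nbrs n E x z))"
  unfolding T_def
proof (intro sum.cong refl)
  fix x assume x: "x \<in> {..<n}"
  have "W n E 3 x x = W n E (2 + 1) x x" by simp
  also have "\<dots> = (\<Sum>z<n. W n E 2 x z * W n E 1 z x)" using W_add[OF sg] x by blast
  also have "\<dots> = (\<Sum>z<n. of_bool (E x z) * real (common_nbrs n E x z))"
  proof (intro sum.cong refl)
    fix z assume z: "z \<in> {..<n}"
    have "E z x = E x z" using sg unfolding simple_graph_def by blast
    then show "W n E 2 x z * W n E 1 z x = of_bool (E x z) * real (common_nbrs n E x z)"
      using W_2[OF sg, of x z] W_1[of z n E x] x z by simp
  qed
  finally show "W n E 3 x x = (\<Sum>z<n. of_bool (E x z) * real (common_nbrs n E x z))" .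
qed

lemma P4: "P n E cf 4 x y = cf 0 * W n E 0 x y + cf 1 * W n E 1 x y + cf 2 * W n E 2 x y + cf 3 * W n E 3 x y"
  by (simp add: P_def eval_nat_numeral)

definition cf3 :: "nat \<Rightarrow> nat \<Rightarrow> nat \<Rightarrow> nat \<Rightarrow> nat \<Rightarrow> real" where
  "cf3 k c b2 a3 i = (if i = 0 then real b2 - (real a3 - real b2) * (real k - real c) / real c
     else if i = 1 then (real k - real c) / real c + real b2
     else if i = 2 then (real a3 - real b2) / real c else if i = 3 then - 1 / real c else 0)"

lemma alg3:
  fixes w1 w2 w3 d k c b2 a3 :: real
  assumes c: "c \<noteq> 0"
  shows "((k - c) * w1 + c * k - w3) / c - (b2 * (1 - d - w1 - ((k - c) * d + c - w2) / c) + a3 * (((k - c) * d + c - w2) / c))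
    = (b2 - (a3 - b2) * (k - c) / c) * d + ((k - c) / c + b2) * w1 + ((a3 - b2) / c) * w2 + (- 1 / c) * w3 + (k - a3)"
  using c by (simp add: field_simps)

lemma W3_equiv:
  assumes sg: "simple_graph n E" and reg: "regular n E k" and c0: "c > 0"
    and dz: "\<And>x y. x < n \<Longrightarrow> y < n \<Longrightarrow> x \<noteq> y \<Longrightarrow> common_nbrs n E x y = c \<or> common_nbrs n E x y = 0"
    and edge: "\<And>x y. E x y \<Longrightarrow> common_nbrs n E x y = c"
    and x: "x < n" and y: "y < n"
  shows "real (card {z. z < n \<and> E x z \<and> R3 n E z y}) - (real b2 * of_bool (R2 n E c x y) + real a3 * of_bool (R3 n E x y))
     = P n E (cf3 k c b2 a3) 4 x y + (real k - real a3)"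
proof -
  have cne: "real c \<noteq> 0" using c0 by simp
  have iR3: "of_bool (R3 n E z w) = ((real k - real c) * dl z w + real c - W n E 2 z w) / real c"
    if z: "z < n" and w: "w < n" for z w
  proof (cases "z = w")
    case True
    then show ?thesis using W_2[OF sg z w] common_self_reg[OF reg z] by (simp add: R3_def)
  next
    case False
    then show ?thesis using W_2[OF sg z w] dz[OF z w False] cne c0 by (auto simp: R3_def)
  qed
  have R3nE: "R3 n E z w \<Longrightarrow> \<not> E z w" for z w using edge c0 unfolding R3_def by force
  have iR2: "of_bool (R2 n E c x y) = 1 - dl x y - W n E 1 x y - of_bool (R3 n E x y)"
  proof (cases "x = y")
    case True
    have "\<not> E x x" using sg unfolding simple_graph_def by blast
    then have "W n E 1 x y = 0" using W_1[OF x, of E y] True by simp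
    moreover have "\<not> R2 n E c x y" "\<not> R3 n E x y" using True by (auto simp: R2_def R3_def)
    ultimately show ?thesis using True by simp
  next
    case False
    show ?thesis
    proof (cases "E x y")
      case True
      then have "W n E 1 x y = 1" using W_1[OF x, of E y] by simp
      moreover have "\<not> R2 n E c x y" using True by (simp add: R2_def)
      moreover have "\<not> R3 n E x y" using R3nE True by blast
      ultimately show ?thesis using False by simp
    next
      case nE: False
      then have w: "W n E 1 x y = 0" using W_1[OF x, of E y] by simp
      show ?thesis
      proof (cases "common_nbrs n E x y = c")
        case True
        then have "R2 n E c x y" "\<not> R3 n E x y" using False nE c0 by (auto simp: R2_def R3_def)
        then show ?thesis using w False by simp
      next
        case cF: False
        then have "common_nbrs n E x y = 0" using dz[OF x y False] by simp
        then have "\<not> R2 n E c x y" "R3 n E x y" using False cF by (auto simp: R2_def R3_def)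
        then show ?thesis using w False by simp
      qed
    qed
  qed
  have h123: "(1::nat) + 2 = 3" by simp
  have "real (card {z. z < n \<and> E x z \<and> R3 n E z y}) = (\<Sum>z<n. of_bool (E x z \<and> R3 n E z y))"
    by (rule cardR)
  also have "\<dots> = (\<Sum>z<n. W n E 1 x z * (((real k - real c) * dl z y + real c - W n E 2 z y) / real c))"
  proof (intro sum.cong refl)
    fix z assume z: "z \<in> {..<n}"
    have e: "of_bool (R3 n E z y) = ((real k - real c) * dl z y + real c - W n E 2 z y) / real c"
      by (rule iR3) (use z y in auto)
    have w: "W n E 1 x z = of_bool (E x z)" by (rule W_1[OF x])
    show "of_bool (E x z \<and> R3 n E z y) = W n E 1 x z * (((real k - real c) * dl z y + real c - W n E 2 z y) / real c)"
      by (simp only: w e[symmetric] of_bool_conj)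
  qed
  also have "\<dots> = (\<Sum>z<n. (real k - real c) * (W n E 1 x z * dl z y) + real c * W n E 1 x z
       - W n E 1 x z * W n E 2 z y) / real c"
    unfolding sum_divide_distrib by (intro sum.cong refl) (simp add: field_simps del: of_bool_eq)
  also have "(\<Sum>z<n. (real k - real c) * (W n E 1 x z * dl z y) + real c * W n E 1 x z
       - W n E 1 x z * W n E 2 z y) = (real k - real c) * (\<Sum>z<n. W n E 1 x z * dl z y) + real c * (\<Sum>z<n. W n E 1 x z)
       - (\<Sum>z<n. W n E 1 x z * W n E 2 z y)"
    by (simp only: sum.distrib sum_subtractf sum_distrib_left)
  also have "(\<Sum>z<n. W n E 1 x z * dl z y) = W n E 1 x y" using sum_delta_r[OF y] by simp
  also have "(\<Sum>z<n. W n E 1 x z) = real k" using W_rowsum[OF sg reg x, of 1] by simp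
  also have "(\<Sum>z<n. W n E 1 x z * W n E 2 z y) = W n E 3 x y"
    by (rule sym, rule W_add[OF sg x, of 1 2 y, unfolded h123])
  finally have L: "real (card {z. z < n \<and> E x z \<and> R3 n E z y}) =
     ((real k - real c) * W n E 1 x y + real c * real k - W n E 3 x y) / real c" .
  have R: "of_bool (R3 n E x y) = ((real k - real c) * dl x y + real c - W n E 2 x y) / real c"
    using iR3[OF x y] .
  have W0: "W n E 0 x y = dl x y" by simp
  have f0: "cf3 k c b2 a3 0 = real b2 - (real a3 - real b2) * (real k - real c) / real c" by (simp add: cf3_def)
  have f1: "cf3 k c b2 a3 1 = (real k - real c) / real c + real b2" by (simp add: cf3_def)
  have f2: "cf3 k c b2 a3 2 = (real a3 - real b2) / real c" by (simp add: cf3_def)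
  have f3: "cf3 k c b2 a3 3 = - 1 / real c" by (simp add: cf3_def)
  show ?thesis unfolding L iR2 R P4 W0 f0 f1 f2 f3 by (rule alg3[OF cne])
qed



lemma H_G:
  assumes D: "distance_regular n E 3 ai bi ci" and a1: "ai 1 = ci 2"
    and SD: "strongly_deza n E (bi 0) (ci 2) 0"
  shows "HG n E (bi 0) (ci 2) (bi 2) (ai 3)"
proof -
  define k where "k = bi 0"
  define c where "c = ci 2"
  have sg: "simple_graph n E" using D unfolding distance_regular_def by blast
  have dz0: "deza n E k c 0" using SD unfolding strongly_deza_def k_def c_def by blast
  have reg: "regular n E k" using dz0 by (simp add: deza_def)
  have dz: "\<And>x y. x < n \<Longrightarrow> y < n \<Longrightarrow> x \<noteq> y \<Longrightarrow> common_nbrs n E x y = c \<or> common_nbrs n E x y = 0"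
    using dz0 by (simp add: deza_def)
  have SB: "strongly_regular n (childB n E c 0)" using SD by (simp add: strongly_deza_def c_def)
  obtain a1' b1' where "childB n E c 0 a1' b1'"
    using SB unfolding strongly_regular_def srg_def edgeless_def by blast
  then have c0: "c > 0" by (auto simp: childB_def split: if_splits)
  have hd: "has_diameter n E 3" using D unfolding distance_regular_def by blast
  have conn: "\<And>x y. x < n \<Longrightarrow> y < n \<Longrightarrow> \<exists>m. walk n E m x y"
    using hd unfolding has_diameter_def connected_graph_def by blast
  have le3: "\<And>x y. x < n \<Longrightarrow> y < n \<Longrightarrow> gdist n E x y \<le> 3"
    using hd unfolding has_diameter_def by blast
  obtain x0 y0 where xy0: "x0 < n" "y0 < n" "gdist n E x0 y0 = 3"
    using hd unfolding has_diameter_def by blast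
  have DR: "\<And>x y. x < n \<Longrightarrow> y < n \<Longrightarrow>
      card {z. z < n \<and> E y z \<and> gdist n E x z = gdist n E x y + 1} = bi (gdist n E x y) \<and>
      card {z. z < n \<and> E y z \<and> gdist n E x z = gdist n E x y} = ai (gdist n E x y)"
    using D unfolding distance_regular_def Let_def by blast
  have g0: "gdist n E x y = 0 \<longleftrightarrow> x = y" if "x < n" "y < n" for x y
  proof
    assume "gdist n E x y = 0"
    then have "walk n E 0 x y" using gdist_walk conn[OF that] by metis
    then show "x = y" by simp
  qed (simp add: gd0)
  have g1: "gdist n E x y = 1 \<longleftrightarrow> E x y" if "x < n" "y < n" for x y
  proof
    assume "gdist n E x y = 1"
    then have "walk n E 1 x y" using gdist_walk conn[OF that] by metis
    then show "E x y" using walk_1[OF sg] by blast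
  qed (rule gd1[OF sg])
  have edge: "common_nbrs n E x y = c" if e: "E x y" for x y
  proof -
    have xy: "x < n" "y < n" using e sg unfolding simple_graph_def by blast+
    have "gdist n E x y = 1" using g1[OF xy] e by simp
    then have "card {z. z < n \<and> E y z \<and> gdist n E x z = 1} = ai 1" using DR[OF xy] by simp
    moreover have "{z. z < n \<and> E y z \<and> gdist n E x z = 1} = {z. z < n \<and> E x z \<and> E y z}"
      using g1[OF xy(1)] by auto
    ultimately show ?thesis unfolding common_nbrs_def c_def a1 by simp
  qed
  have nE: "R3 n E x y \<Longrightarrow> \<not> E x y" for x y using edge c0 unfolding R3_def by force
  have gR3: "gdist n E x y = 3 \<longleftrightarrow> R3 n E x y" if xy: "x < n" "y < n" for x y
  proof
    assume g: "gdist n E x y = 3"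
    then have "x \<noteq> y" "\<not> E x y" using g0[OF xy] g1[OF xy] by auto
    moreover have "common_nbrs n E x y = 0"
    proof (rule ccontr)
      assume "common_nbrs n E x y \<noteq> 0"
      then have "gdist n E x y = 2" using gd2[OF sg] calculation by simp
      then show False using g by simp
    qed
    ultimately show "R3 n E x y" unfolding R3_def by simp
  next
    assume r: "R3 n E x y"
    obtain m where w: "walk n E m x y" using conn[OF xy] by blast
    have "gdist n E x y \<ge> 3" using gd3[OF sg _ nE[OF r] _ w] r by (auto simp: R3_def)
    then show "gdist n E x y = 3" using le3[OF xy] by simp
  qed
  have gR2: "gdist n E x y = 2 \<longleftrightarrow> R2 n E c x y" if xy: "x < n" "y < n" for x y
  proof
    assume g: "gdist n E x y = 2"
    then have ne: "x \<noteq> y" "\<not> E x y" using g0[OF xy] g1[OF xy] by auto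
    moreover have "common_nbrs n E x y \<noteq> 0"
    proof
      assume "common_nbrs n E x y = 0"
      then have "R3 n E x y" using ne unfolding R3_def by simp
      then show False using gR3[OF xy] g by simp
    qed
    ultimately show "R2 n E c x y" using dz[OF xy] unfolding R2_def by auto
  next
    assume "R2 n E c x y"
    then show "gdist n E x y = 2" using gd2[OF sg] c0 unfolding R2_def by auto
  qed
  have R3s: "R3 n E x y = R3 n E y x" for x y unfolding R3_def using common_sym by metis
  have R2s: "R2 n E c x y = R2 n E c y x" for x y
    unfolding R2_def using common_sym sg unfolding simple_graph_def by metis
  have cnt: "real (card {z. z < n \<and> E x z \<and> R3 n E z y}) = real (bi 2) * of_bool (R2 n E c x y) + real (ai 3) * of_bool (R3 n E x y)"
    if xy: "x < n" "y < n" for x y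
  proof -
    have S: "{z. z < n \<and> E x z \<and> R3 n E z y} = {z. z < n \<and> E x z \<and> gdist n E y z = 3}"
      using gR3[OF xy(2)] R3s by blast
    have ex: "x = y \<or> E x y \<or> R2 n E c x y \<or> R3 n E x y" using dz[OF xy] unfolding R2_def R3_def by auto
    have R32: "\<not> (R2 n E c x y \<and> R3 n E x y)" using c0 unfolding R2_def R3_def by auto
    consider "x = y" | "E x y" | "R2 n E c x y" "\<not> R3 n E x y" | "R3 n E x y" "\<not> R2 n E c x y"
      using ex R32 by blast
    then show ?thesis
    proof cases
      case 1
      have "gdist n E y z \<noteq> 3" if "z < n" "E y z" for z using g1[OF xy(2) that(1)] that(2) by simp
      then have "{z. z < n \<and> E x z \<and> gdist n E y z = 3} = {}" using 1 by auto
      moreover have "\<not> R2 n E c x y" "\<not> R3 n E x y" using 1 by (auto simp: R2_def R3_def)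
      ultimately show ?thesis using S by simp
    next
      case 2
      have "{z. z < n \<and> E x z \<and> R3 n E z y} = {}"
      proof (rule ccontr)
        assume "\<not> ?thesis"
        then obtain z where z: "z < n" "E x z" "R3 n E z y" by blast
        have "E z x" "E x y" using z(2) 2 sg unfolding simple_graph_def by blast+
        then have "common_nbrs n E z y > 0" using common_pos[OF sg] xy by blast
        then show False using z(3) unfolding R3_def by simp
      qed
      moreover have "\<not> R2 n E c x y" "\<not> R3 n E x y" using 2 nE by (auto simp: R2_def)
      ultimately show ?thesis by simp
    next
      case 3
      have "gdist n E y x = 2" using gR2[OF xy(2,1)] R2s 3 by blast
      then have "card {z. z < n \<and> E x z \<and> gdist n E y z = 3} = bi 2" using DR[OF xy(2,1)] by simp
      then show ?thesis using S 3 by simp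
    next
      case 4
      have "gdist n E y x = 3" using gR3[OF xy(2,1)] R3s 4 by blast
      then have "card {z. z < n \<and> E x z \<and> gdist n E y z = 3} = ai 3" using DR[OF xy(2,1)] by simp
      then show ?thesis using S 4 by simp
    qed
  qed
  have r0: "R3 n E x0 y0" using gR3[OF xy0(1,2)] xy0(3) by simp
  have a3k: "ai 3 < k"
  proof -
    have "walk n E 3 x0 y0" using gdist_walk conn[OF xy0(1,2)] xy0(3) by metis
    then obtain z where z: "z < n" "E x0 z" "walk n E 2 z y0" using walk_3 by blast
    have "gdist n E z y0 \<le> 2" using gdist_le[OF z(3)] .
    then have nz: "\<not> R3 n E z y0" using gR3[OF z(1) xy0(2)] by simp
    have "\<not> R2 n E c x0 y0" using r0 c0 unfolding R2_def R3_def by auto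
    then have ca: "card {w. w < n \<and> E x0 w \<and> R3 n E w y0} = ai 3" using cnt[OF xy0(1,2)] r0 by simp
    have ck: "card {w. w < n \<and> E x0 w} = k" using reg xy0(1) unfolding regular_def by blast
    have "{w. w < n \<and> E x0 w \<and> R3 n E w y0} \<subset> {w. w < n \<and> E x0 w}" using z nz by blast
    then have "card {w. w < n \<and> E x0 w \<and> R3 n E w y0} < card {w. w < n \<and> E x0 w}"
      by (intro psubset_card_mono) auto
    then show ?thesis using ca ck by simp
  qed
  show ?thesis unfolding k_def[symmetric] c_def[symmetric]
    by (unfold_locales) (use sg reg c0 dz edge cnt a3k xy0 r0 in auto)
qed

lemma T3_edge:
  assumes sg: "simple_graph n E" and reg: "regular n E k" and edge: "\<And>x y. E x y \<Longrightarrow> common_nbrs n E x y = c"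
  shows "T n E 3 = real n * (real k * real c)"
proof -
  have "T n E 3 = (\<Sum>x<n. \<Sum>z<n. of_bool (E x z) * real c)"
    unfolding T3[OF sg] by (intro sum.cong refl) (auto simp: edge simp del: sum_of_bool_mult_eq)
  also have "\<dots> = (\<Sum>x<n. real k * real c)"
  proof (intro sum.cong refl)
    fix x assume "x \<in> {..<n}"
    then have "(\<Sum>z<n. of_bool (E x z) :: real) = real k" using card_nbrs[OF reg] by simp
    then show "(\<Sum>z<n. of_bool (E x z) * real c) = real k * real c"
      by (simp only: sum_distrib_right[symmetric])
  qed
  finally show ?thesis by simp
qed

lemma H_G':
  assumes H: "HG n E k c b2 a3" and sg': "simple_graph n E'" and dz': "deza n E' k c 0"
    and TT: "\<And>m. T n E m = T n E' m"
    and ex: "\<exists>x<n. \<exists>y<n. x \<noteq> y \<and> common_nbrs n E' x y = 0"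
  shows "HG n E' k c b2 a3"
proof -
  interpret G: HG n E k c b2 a3 by (rule H)
  have reg': "regular n E' k" using dz' by (simp add: deza_def)
  have dz: "\<And>x y. x < n \<Longrightarrow> y < n \<Longrightarrow> x \<noteq> y \<Longrightarrow> common_nbrs n E' x y = c \<or> common_nbrs n E' x y = 0"
    using dz' by (simp add: deza_def)
  have TG: "T n E 3 = real n * (real k * real c)" by (rule T3_edge[OF G.sg G.reg G.edge])
  have nn: "(\<Sum>x<n. \<Sum>z<n. of_bool (E' x z) * (real c - real (common_nbrs n E' x z))) = 0"
  proof -
    have "(\<Sum>x<n. \<Sum>z<n. of_bool (E' x z) * (real c - real (common_nbrs n E' x z)))
      = (\<Sum>x<n. \<Sum>z<n. of_bool (E' x z) * real c) - T n E' 3"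
      unfolding T3[OF sg'] by (simp add: algebra_simps sum_subtractf del: sum_mult_of_bool_eq sum_of_bool_mult_eq)
    also have "(\<Sum>x<n. \<Sum>z<n. of_bool (E' x z) * real c) = real n * (real k * real c)"
    proof -
      have "(\<Sum>x<n. \<Sum>z<n. of_bool (E' x z) * real c) = (\<Sum>x<n. real k * real c)"
      proof (intro sum.cong refl)
        fix x assume "x \<in> {..<n}"
        then have "(\<Sum>z<n. of_bool (E' x z) :: real) = real k" using card_nbrs[OF reg'] by simp
        then show "(\<Sum>z<n. of_bool (E' x z) * real c) = real k * real c"
          by (simp only: sum_distrib_right[symmetric])
      qed
      then show ?thesis by simp
    qed
    finally show ?thesis using TT[of 3] TG by simp
  qed
  have nonneg: "of_bool (E' x z) * (real c - real (common_nbrs n E' x z)) \<ge> 0" for x z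
  proof (cases "E' x z")
    case True
    then have "x < n" "z < n" "x \<noteq> z" using sg' unfolding simple_graph_def by blast+
    then show ?thesis using dz True by fastforce
  qed simp
  have edge: "common_nbrs n E' x y = c" if e: "E' x y" for x y
  proof -
    have xy: "x < n" "y < n" using e sg' unfolding simple_graph_def by blast+
    define g where "g x z = of_bool (E' x z) * (real c - real (common_nbrs n E' x z))" for x z
    have gnn: "0 \<le> g x z" for x z unfolding g_def by (rule nonneg)
    have nn': "(\<Sum>x<n. \<Sum>z<n. g x z) = 0" using nn unfolding g_def .
    have Fnn: "0 \<le> (\<Sum>z<n. g x z)" for x by (rule sum_nonneg) (rule gnn)
    have "\<forall>x\<in>{..<n}. (\<Sum>z<n. g x z) = 0"
      using sum_nonneg_eq_0_iff[of "{..<n}" "\<lambda>x. \<Sum>z<n. g x z"] nn' Fnn by blast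
    then have "(\<Sum>z<n. g x z) = 0" using xy(1) by blast
    then have "\<forall>z\<in>{..<n}. g x z = 0"
      using sum_nonneg_eq_0_iff[of "{..<n}" "\<lambda>z. g x z"] gnn by blast
    then have "g x y = 0" using xy(2) by blast
    then show ?thesis using e unfolding g_def by simp
  qed
  have cntG: "P n E (cf3 k c b2 a3) 4 x y = real a3 - real k" if "x < n" "y < n" for x y
    using W3_equiv[OF G.sg G.reg G.c0 G.dz G.edge that, of b2 a3] G.cnt[OF that] by simp
  have cnt: "real (card {z. z < n \<and> E' x z \<and> R3 n E' z y}) = real b2 * of_bool (R2 n E' c x y) + real a3 * of_bool (R3 n E' x y)"
    if xy: "x < n" "y < n" for x y
  proof -
    have "P n E' (cf3 k c b2 a3) 4 x y = real a3 - real k"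
      by (rule transfer[OF G.sg G.reg sg' reg' TT cntG xy])
    then show ?thesis using W3_equiv[OF sg' reg' G.c0 dz edge xy, of b2 a3] by simp
  qed
  obtain x0 y0 where "x0 < n" "y0 < n" "x0 \<noteq> y0" "common_nbrs n E' x0 y0 = 0" using ex by blast
  then have ex3: "\<exists>x<n. \<exists>y<n. R3 n E' x y" unfolding R3_def by blast
  show ?thesis
    by (unfold_locales) (use sg' reg' G.c0 dz edge cnt G.a3k ex3 in auto)
qed



theorem proposition3:
  fixes n n' :: nat and E E' :: "nat \<Rightarrow> nat \<Rightarrow> bool"
    and ai bi ci :: "nat \<Rightarrow> nat" and k' b' a' :: nat
  assumes "distance_regular n E 3 ai bi ci"
    and "ai 1 = ci 2"
    and "strongly_deza n E (bi 0) (ci 2) 0"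
    and "simple_graph n' E'"
    and "cospectral n E n' E'"
    and "deza n' E' k' b' a'"
  shows "strongly_deza n' E' k' b' a' \<and>
         (distance_regular n' E' 3 ai bi ci \<or> (b', a') \<noteq> (ci 2, 0))"
proof -
  note D = assms(1) and a1 = assms(2) and SD = assms(3)
  have nn: "n = n'" and TT0: "\<And>m. T n E m = T n' E' m" using cospectral_T[OF assms(5)] by auto
  have TT: "\<And>m. T n E m = T n E' m" using TT0 nn by simp
  have sg: "simple_graph n E" using D unfolding distance_regular_def by blast
  have sg': "simple_graph n E'" using assms(4) nn by simp
  have dz0: "deza n E (bi 0) (ci 2) 0" using SD by (simp add: strongly_deza_def)
  have reg: "regular n E (bi 0)" using dz0 by (simp add: deza_def)
  have dzk: "deza n E' k' b' a'" using assms(6) nn by simp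
  have reg': "regular n E' k'" using dzk by (simp add: deza_def)
  have npos: "n > 0" using D unfolding distance_regular_def has_diameter_def connected_graph_def by blast
  have "real n * real (bi 0) = real n * real k'" using T2[OF sg reg] T2[OF sg' reg'] TT[of 2] by metis
  then have kk: "k' = bi 0" using npos by simp
  have dz': "deza n E' (bi 0) b' a'" using dzk kk by simp
  have SA: "strongly_regular n (childA n E (ci 2) 0)" and SB: "strongly_regular n (childB n E (ci 2) 0)"
    using SD by (simp_all add: strongly_deza_def)
  have A: "strongly_deza n E' (bi 0) b' a' \<and> a' < b' \<and> (\<exists>x<n. \<exists>y<n. x \<noteq> y \<and> common_nbrs n E' x y = a')"
    by (rule partA[OF sg dz0 SA SB sg' dz' TT])
  have part1: "strongly_deza n' E' k' b' a'" using A nn kk by simp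
  have part2: "distance_regular n' E' 3 ai bi ci \<or> (b', a') \<noteq> (ci 2, 0)"
  proof (cases "(b', a') = (ci 2, 0)")
    case False then show ?thesis by simp
  next
    case True
    then have bb: "b' = ci 2" and aa: "a' = 0" by auto
    have H: "HG n E (bi 0) (ci 2) (bi 2) (ai 3)" by (rule H_G[OF D a1 SD])
    have dz'': "deza n E' (bi 0) (ci 2) 0" using dz' bb aa by simp
    have ex: "\<exists>x<n. \<exists>y<n. x \<noteq> y \<and> common_nbrs n E' x y = 0" using A aa by simp
    have H': "HG n E' (bi 0) (ci 2) (bi 2) (ai 3)" by (rule H_G'[OF H sg' dz'' TT ex])
    have P: "\<And>i. i \<le> 3 \<Longrightarrow> real (ai i) = aR (bi 0) (ci 2) (bi 2) (ai 3) i \<and> real (bi i) = bR (bi 0) (ci 2) (bi 2) (ai 3) i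
        \<and> real (ci i) = cR (bi 0) (ci 2) (bi 2) (ai 3) i"
      by (rule HG.params[OF H D])
    have "distance_regular n E' 3 ai bi ci" by (rule HG.drg[OF H' P])
    then show ?thesis using nn by simp
  qed
  show ?thesis using part1 part2 by blast
qed



end
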